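(* Let ${\cal G}$ be a graph and let $\nu>p\ge1$. For any $\phi\in C^1_{\rm Dir}({\cal G})$, $$\|\nabla\phi\|_p\ge c_{\nu,p}\,\|\phi\|_{p\nu/(\nu-p)},\qquad c_{\nu,p}=I_\nu({\cal G})\,\rho_{\sup}^{-(p-1)/p}\,\frac{\nu-p}{p(\nu-1)}.$$ The same holds when ${\cal G}$ is closed with $\widetilde I_\nu({\cal G})$ in place of $I_\nu({\cal G})$, provided $\phi$ is additionally split.
   Context: A graph ${\cal G}$ consists of an undirected graph $(V,E)$ (possibly infinite; multiple edges, self-loops allowed), edge lengths $\ell_e>0$, boundary vertices $\partial{\cal G}\subseteq V$, a vertex measure ${\cal V}$ (supported on $V$, ${\cal V}(v)>0$), and an edge measure ${\cal E}$ (zero on vertices, $a_e>0$ times Lebesgue measure on the interior of edge $e$); ${\cal G}$ is identified with its geometric realization. $C^1_{\rm Dir}({\cal G})$: continuous functions, uniformly continuously differentiable on each open edge, supported in finitely many vertices and edges, vanishing on $\partial{\cal G}$. Function norms are $L^q({\cal V})$ norms; $\|\nabla\phi\|_p$ is the $L^p({\cal E})$ norm of $|\nabla\phi|$. $\rho_{\sup}=\sup_v{\cal V}(v)^{-1}\sum_{e\ni v}{\cal E}(e)/2$. For open $\Omega$ with finite boundary, ${\cal A}(\partial\Omega)=\sum_{x\in\partial\Omega\setminus V}a_{e(x)}+\sum_{v\in\partial\Omega\cap V}\sum_{e:\,v\in\overline{\Omega\cap e^\circ}}a_e$; $\Omega$ admissible if open, finite boundary, disjoint from $\partial{\cal G}$.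 $I_\nu({\cal G})=\inf_\Omega{\cal A}(\partial\Omega)/{\cal V}(\Omega)^{1/\nu'}$ over admissible $\Omega$ ($\nu'$ dual exponent). Closed graph: finite, $\partial{\cal G}=\emptyset$; split: ${\cal V}(\{\phi>0\}),{\cal V}(\{\phi<0\})\le{\cal V}({\cal G})/2$; $\widetilde I_\nu({\cal G})=\inf_\Omega{\cal A}(\partial\Omega)\min({\cal V}(\Omega),{\cal V}(\complement\Omega))^{(1/\nu)-1}$. *)

theory Defs
  imports "HOL-Analysis.Analysis"
begin

text \<open>A graph: vertex set, edge set (multiple edges and self-loops allowed via the
  endpoint map), edge lengths, edge weights a_e (edge measure = a_e times Lebesgue),
  vertex measure, boundary vertices.\<close>

record ('v, 'e) mgraph =
  verts :: "'v set"
  edges :: "'e set"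
  ends  :: "'e \<Rightarrow> 'v \<times> 'v"
  len   :: "'e \<Rightarrow> real"
  wt    :: "'e \<Rightarrow> real"
  vmeas :: "'v \<Rightarrow> real"
  bdry  :: "'v set"

definition is_graph :: "('v, 'e) mgraph \<Rightarrow> bool" where
  "is_graph G \<longleftrightarrow>
     (\<forall>e\<in>edges G. fst (ends G e) \<in> verts G \<and> snd (ends G e) \<in> verts G
                  \<and> len G e > 0 \<and> wt G e > 0)
   \<and> (\<forall>v\<in>verts G. vmeas G v > 0) \<and> bdry G \<subseteq> verts G"

text \<open>Points of the geometric realization: vertices and interior points of edges.\<close>

datatype ('v, 'e) gpoint = Vx 'v | Ed 'e real

definition pts :: "('v, 'e) mgraph \<Rightarrow> ('v, 'e) gpoint set" where
  "pts G = Vx ` verts G \<union> {Ed e t | e t. e \<in> edges G \<and> 0 < t \<and> t < len G e}"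

definition eint :: "('v, 'e) mgraph \<Rightarrow> 'e \<Rightarrow> ('v, 'e) gpoint set" where
  "eint G e = {Ed e t | t. 0 < t \<and> t < len G e}"

definition param :: "('v, 'e) mgraph \<Rightarrow> 'e \<Rightarrow> real \<Rightarrow> ('v, 'e) gpoint" where
  "param G e t = (if t \<le> 0 then Vx (fst (ends G e))
                  else if len G e \<le> t then Vx (snd (ends G e)) else Ed e t)"

text \<open>Topology of the geometric realization (quotient topology of the closed edges).\<close>

definition gopen :: "('v, 'e) mgraph \<Rightarrow> ('v, 'e) gpoint set \<Rightarrow> bool" where
  "gopen G U \<longleftrightarrow> U \<subseteq> pts G \<and>
     (\<forall>e\<in>edges G. openin (top_of_set {0..len G e}) ({0..len G e} \<inter> param G e -` U))"

definition gclosure :: "('v, 'e) mgraph \<Rightarrow> ('v, 'e) gpoint set \<Rightarrow> ('v, 'e) gpoint set" where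
  "gclosure G S = {x \<in> pts G. \<forall>U. gopen G U \<and> x \<in> U \<longrightarrow> U \<inter> S \<noteq> {}}"

definition ginterior :: "('v, 'e) mgraph \<Rightarrow> ('v, 'e) gpoint set \<Rightarrow> ('v, 'e) gpoint set" where
  "ginterior G S = {x. \<exists>U. gopen G U \<and> x \<in> U \<and> U \<subseteq> S}"

definition gfrontier :: "('v, 'e) mgraph \<Rightarrow> ('v, 'e) gpoint set \<Rightarrow> ('v, 'e) gpoint set" where
  "gfrontier G S = gclosure G S - ginterior G S"

text \<open>Vertex measure of a set of points (the measure is supported on vertices).\<close>

definition vol :: "('v, 'e) mgraph \<Rightarrow> ('v, 'e) gpoint set \<Rightarrow> ennreal" where
  "vol G S = (\<Sum>\<^sub>\<infinity> v \<in> {v \<in> verts G. Vx v \<in> S}. ennreal (vmeas G v))"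

definition bweight :: "('v, 'e) mgraph \<Rightarrow> ('v, 'e) gpoint set \<Rightarrow> ('v, 'e) gpoint \<Rightarrow> ennreal" where
  "bweight G \<Omega> x = (case x of
      Ed e t \<Rightarrow> ennreal (wt G e)
    | Vx v \<Rightarrow> (\<Sum>\<^sub>\<infinity> e \<in> {e \<in> edges G. Vx v \<in> gclosure G (\<Omega> \<inter> eint G e)}. ennreal (wt G e)))"

definition area :: "('v, 'e) mgraph \<Rightarrow> ('v, 'e) gpoint set \<Rightarrow> ennreal" where
  "area G \<Omega> = (\<Sum>x \<in> gfrontier G \<Omega>. bweight G \<Omega> x)"

definition admissible :: "('v, 'e) mgraph \<Rightarrow> ('v, 'e) gpoint set \<Rightarrow> bool" where
  "admissible G \<Omega> \<longleftrightarrow> gopen G \<Omega> \<and> finite (gfrontier G \<Omega>) \<and> \<Omega> \<inter> Vx ` bdry G = {}"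

text \<open>Power with real exponent r >= 0 on [0, infinity], with x^0 = 1.\<close>

definition epow :: "ennreal \<Rightarrow> real \<Rightarrow> ennreal" where
  "epow x r = (if r = 0 then 1 else if x = \<infinity> then \<infinity> else ennreal (enn2real x powr r))"

definition Iso :: "('v, 'e) mgraph \<Rightarrow> real \<Rightarrow> ennreal" where
  "Iso G \<nu> = (INF \<Omega> \<in> {\<Omega>. admissible G \<Omega> \<and> \<Omega> \<noteq> {}}.
                 area G \<Omega> / epow (vol G \<Omega>) (1 - 1 / \<nu>))"

definition closed_graph :: "('v, 'e) mgraph \<Rightarrow> bool" where
  "closed_graph G \<longleftrightarrow> finite (verts G) \<and> finite (edges G) \<and> bdry G = {}"

definition Iso_tilde :: "('v, 'e) mgraph \<Rightarrow> real \<Rightarrow> ennreal" where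
  "Iso_tilde G \<nu> = (INF \<Omega> \<in> {\<Omega>. admissible G \<Omega> \<and> \<Omega> \<noteq> {} \<and> \<Omega> \<noteq> pts G}.
                 area G \<Omega> / epow (min (vol G \<Omega>) (vol G (pts G - \<Omega>))) (1 - 1 / \<nu>))"

definition rho_sup :: "('v, 'e) mgraph \<Rightarrow> ennreal" where
  "rho_sup G = (SUP v \<in> verts G.
      (\<Sum>\<^sub>\<infinity> e \<in> {e \<in> edges G. v = fst (ends G e) \<or> v = snd (ends G e)}.
           ennreal (wt G e * len G e / 2)) / ennreal (vmeas G v))"

definition edge_fun :: "('v, 'e) mgraph \<Rightarrow> (('v, 'e) gpoint \<Rightarrow> real) \<Rightarrow> 'e \<Rightarrow> real \<Rightarrow> real" where
  "edge_fun G \<phi> e t = \<phi> (param G e t)"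

definition vsupp :: "('v, 'e) mgraph \<Rightarrow> (('v, 'e) gpoint \<Rightarrow> real) \<Rightarrow> 'v set" where
  "vsupp G \<phi> = {v \<in> verts G. \<phi> (Vx v) \<noteq> 0}"

definition esupp :: "('v, 'e) mgraph \<Rightarrow> (('v, 'e) gpoint \<Rightarrow> real) \<Rightarrow> 'e set" where
  "esupp G \<phi> = {e \<in> edges G. \<exists>t. 0 < t \<and> t < len G e \<and> \<phi> (Ed e t) \<noteq> 0}"

definition C1_Dir :: "('v, 'e) mgraph \<Rightarrow> (('v, 'e) gpoint \<Rightarrow> real) \<Rightarrow> bool" where
  "C1_Dir G \<phi> \<longleftrightarrow>
     (\<forall>e\<in>edges G. continuous_on {0..len G e} (edge_fun G \<phi> e))
   \<and> (\<forall>e\<in>edges G. \<exists>\<phi>'. (\<forall>t\<in>{0<..<len G e}. (edge_fun G \<phi> e has_real_derivative \<phi>' t) (at t))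
                        \<and> uniformly_continuous_on {0<..<len G e} \<phi>')
   \<and> finite (vsupp G \<phi>) \<and> finite (esupp G \<phi>)
   \<and> (\<forall>v\<in>bdry G. \<phi> (Vx v) = 0)"

definition vnorm :: "('v, 'e) mgraph \<Rightarrow> real \<Rightarrow> (('v, 'e) gpoint \<Rightarrow> real) \<Rightarrow> real" where
  "vnorm G q \<phi> = (\<Sum>v \<in> vsupp G \<phi>. vmeas G v * \<bar>\<phi> (Vx v)\<bar> powr q) powr (1 / q)"

definition grad_norm :: "('v, 'e) mgraph \<Rightarrow> real \<Rightarrow> (('v, 'e) gpoint \<Rightarrow> real) \<Rightarrow> real" where
  "grad_norm G p \<phi> = (\<Sum>e \<in> esupp G \<phi>.
      wt G e * integral {0..len G e} (\<lambda>t. \<bar>deriv (edge_fun G \<phi> e) t\<bar> powr p)) powr (1 / p)"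

definition split_fun :: "('v, 'e) mgraph \<Rightarrow> (('v, 'e) gpoint \<Rightarrow> real) \<Rightarrow> bool" where
  "split_fun G \<phi> \<longleftrightarrow> vol G {x \<in> pts G. \<phi> x > 0} \<le> vol G (pts G) / 2
                     \<and> vol G {x \<in> pts G. \<phi> x < 0} \<le> vol G (pts G) / 2"

definition sob_const :: "ennreal \<Rightarrow> ('v, 'e) mgraph \<Rightarrow> real \<Rightarrow> real \<Rightarrow> ennreal" where
  "sob_const I G \<nu> p = I * inverse (epow (rho_sup G) ((p - 1) / p)) * ennreal ((\<nu> - p) / (p * (\<nu> - 1)))"

end

theory Submission
  imports Defs "HOL-Analysis.Analysis"
begin

lemma young_tangent:
  fixes x A \<theta> :: real
  assumes "0 < \<theta>" "\<theta> \<le> 1" "A > 0" "x \<ge> 0"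
  shows "x powr \<theta> \<le> A powr \<theta> + \<theta> * A powr (\<theta> - 1) * (x - A)"
proof (cases "x = 0")
  case True
  have "A powr (\<theta> - 1) * A = A powr \<theta>"
    using assms by (simp add: powr_diff)
  then show ?thesis using True assms
    by (simp add: algebra_simps)
next
  case False
  then have xp: "x > 0" using assms by simp
  have "x powr \<theta> * A powr (1 - \<theta>) \<le> \<theta> * x + (1 - \<theta>) * A"
    using Youngs_inequality_0[of \<theta> "1-\<theta>" x A] assms xp by simp
  then have "A powr (\<theta> - 1) * (x powr \<theta> * A powr (1 - \<theta>)) \<le> A powr (\<theta> - 1) * (\<theta> * x + (1 - \<theta>) * A)"
    by (rule mult_left_mono) simp
  moreover have "A powr (\<theta> - 1) * A powr (1 - \<theta>) = 1"
    using assms by (simp flip: powr_add)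
  moreover have "A powr (\<theta> - 1) * A = A powr \<theta>"
    using assms by (simp add: powr_diff)
  ultimately show ?thesis
    by (simp add: algebra_simps) (metis mult.assoc mult.commute mult.left_commute mult_1)
qed

lemma chord_powr:
  fixes t u s q :: real
  assumes "0 \<le> t" "t \<le> u" "u \<le> s" "t < s" "q \<ge> 1"
  shows "u powr q \<le> t powr q + (s powr q - t powr q) * (u - t) / (s - t)"
proof (cases "t = 0")
  case True
  show ?thesis
  proof (cases "u = 0")
    case True then show ?thesis using \<open>t=0\<close> assms by simp
  next
    case False
    then have up: "u > 0" using assms by simp
    have "u powr q = u powr (q - 1) * u" using up by (simp add: powr_diff)
    also have "\<dots> \<le> s powr (q - 1) * u"
      using up assms by (intro mult_right_mono powr_mono2) auto
    also have "\<dots> = s powr q * u / s" using up assms by (simp add: powr_diff)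
    finally show ?thesis using True assms by simp
  qed
next
  case False
  then have tp: "t > 0" using assms by simp
  define l where "l = (u - t) / (s - t)"
  have l01: "0 \<le> l" "l \<le> 1" using assms by (auto simp: l_def divide_simps)
  have "l * (s - t) = u - t" using assms by (simp add: l_def)
  then have ueq: "u = (1 - l) *\<^sub>R t + l *\<^sub>R s" by (simp add: algebra_simps)
  have "u powr q \<le> (1 - l) * t powr q + l * s powr q"
    using convex_onD[OF powr_convex[OF \<open>q\<ge>1\<close>], of l t s] l01 tp assms ueq by simp
  moreover have "(1 - l) * t powr q + l * s powr q = t powr q + (s powr q - t powr q) * l"
    by (simp add: algebra_simps)
  ultimately show ?thesis by (simp add: l_def)
qed

lemma pw_main:
  fixes t s \<gamma> q :: real
  assumes "0 \<le> t" "t \<le> s" "\<gamma> > 1" "q \<ge> 1" "(\<gamma> - 1) / q \<le> 1"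
  shows "s powr \<gamma> - t powr \<gamma> \<le> \<gamma> * (s - t) * ((s powr q + t powr q) / 2) powr ((\<gamma> - 1) / q)"
proof (cases "t = s")
  case True then show ?thesis by simp
next
  case False
  then have ts: "t < s" using assms by simp
  define \<theta> where "\<theta> = (\<gamma> - 1) / q"
  have th: "0 < \<theta>" "\<theta> \<le> 1" using assms by (auto simp: \<theta>_def)
  define A where "A = (s powr q + t powr q) / 2"
  have Ap: "A > 0" using ts assms by (auto simp: A_def intro: add_pos_nonneg)
  define c1 where "c1 = (s powr q - t powr q) / (2 * (s - t))"
  define G where "G = (\<lambda>u. A powr \<theta> * (u - t) + \<theta> * A powr (\<theta> - 1) *
      (t powr q * (u - t) + c1 * (u - t)^2 - A * (u - t))
      - (u powr \<gamma> - t powr \<gamma>) / \<gamma>)"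
  have "G t \<le> G s"
  proof (rule DERIV_nonneg_imp_increasing_open[OF \<open>t \<le> s\<close>])
    fix u assume u: "t < u" "u < s"
    then have up: "u > 0" using assms by simp
    have D0: "(G has_real_derivative
        (A powr \<theta> + \<theta> * A powr (\<theta> - 1) *
          (t powr q + c1 * (2 * (u - t)) - A) - u powr (\<gamma> - 1))) (at u)"
      unfolding G_def using assms up
      by (auto intro!: derivative_eq_intros has_real_derivative_powr[OF up] simp: algebra_simps)
    have "c1 * (2 * (u - t)) = (s powr q - t powr q) * (u - t) / (s - t)"
      using ts by (simp add: c1_def field_simps)
    with D0 have D: "(G has_real_derivative
        (A powr \<theta> + \<theta> * A powr (\<theta> - 1) *
          (t powr q + (s powr q - t powr q) * (u - t) / (s - t) - A) - u powr (\<gamma> - 1))) (at u)"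
      by simp
    have "u powr (\<gamma> - 1) = (u powr q) powr \<theta>"
      using assms by (simp add: powr_powr \<theta>_def)
    also have "\<dots> \<le> A powr \<theta> + \<theta> * A powr (\<theta> - 1) * (u powr q - A)"
      by (rule young_tangent[OF th Ap]) simp
    also have "\<dots> \<le> A powr \<theta> + \<theta> * A powr (\<theta> - 1) *
          (t powr q + (s powr q - t powr q) * (u - t) / (s - t) - A)"
      using chord_powr[of t u s q] u assms ts th Ap
      by (intro add_left_mono mult_left_mono diff_right_mono) auto
    finally show "\<exists>y. (G has_real_derivative y) (at u) \<and> 0 \<le> y"
      using D by (intro exI[of _ "A powr \<theta> + \<theta> * A powr (\<theta> - 1) *
          (t powr q + (s powr q - t powr q) * (u - t) / (s - t) - A) - u powr (\<gamma> - 1)"]) simp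
  next
    show "continuous_on {t..s} G"
    proof -
      have c: "continuous_on {t..s} (\<lambda>u. u powr \<gamma>)"
        by (rule continuous_on_powr'[OF continuous_on_id continuous_on_const]) (use assms in auto)
      show ?thesis unfolding G_def using assms
        by (intro continuous_on_diff continuous_on_add continuous_on_mult continuous_on_const
              continuous_on_id continuous_on_divide continuous_on_power c) auto
    qed
  qed
  moreover have "G t = 0" by (simp add: G_def)
  moreover have "G s = A powr \<theta> * (s - t) - (s powr \<gamma> - t powr \<gamma>) / \<gamma>"
  proof -
    have "c1 * (s - t)^2 = (s powr q - t powr q) * (s - t) / 2"
      using ts by (simp add: c1_def power2_eq_square field_simps)
    then have "t powr q * (s - t) + c1 * (s - t)^2 - A * (s - t) = 0"
      by (simp add: A_def algebra_simps add_divide_distrib diff_divide_distrib)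
    then show ?thesis by (simp add: G_def)
  qed
  ultimately have "(s powr \<gamma> - t powr \<gamma>) / \<gamma> \<le> A powr \<theta> * (s - t)" by simp
  then have "s powr \<gamma> - t powr \<gamma> \<le> \<gamma> * (A powr \<theta> * (s - t))"
    using assms by (simp add: pos_divide_le_eq mult.commute)
  then show ?thesis by (simp add: A_def \<theta>_def mult_ac)
qed

lemma pw_abs:
  fixes a b \<gamma> q :: real
  assumes "\<gamma> > 1" "q \<ge> 1" "(\<gamma> - 1) / q \<le> 1"
  shows "\<bar>\<bar>a\<bar> powr \<gamma> - \<bar>b\<bar> powr \<gamma>\<bar> \<le> \<gamma> * \<bar>a - b\<bar> * ((\<bar>a\<bar> powr q + \<bar>b\<bar> powr q) / 2) powr ((\<gamma> - 1) / q)"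
proof -
  have key: "\<bar>\<bar>a\<bar> powr \<gamma> - \<bar>b\<bar> powr \<gamma>\<bar> \<le> \<gamma> * \<bar>a - b\<bar> * ((\<bar>a\<bar> powr q + \<bar>b\<bar> powr q) / 2) powr ((\<gamma> - 1) / q)"
    if ab: "\<bar>b\<bar> \<le> \<bar>a\<bar>" for a b :: real
  proof -
    have "\<bar>\<bar>a\<bar> powr \<gamma> - \<bar>b\<bar> powr \<gamma>\<bar> = \<bar>a\<bar> powr \<gamma> - \<bar>b\<bar> powr \<gamma>"
      using ab assms by (simp add: powr_mono2)
    also have "\<dots> \<le> \<gamma> * (\<bar>a\<bar> - \<bar>b\<bar>) * ((\<bar>a\<bar> powr q + \<bar>b\<bar> powr q) / 2) powr ((\<gamma> - 1) / q)"
      using pw_main[of "\<bar>b\<bar>" "\<bar>a\<bar>" \<gamma> q] ab assms by simp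
    also have "\<dots> \<le> \<gamma> * \<bar>a - b\<bar> * ((\<bar>a\<bar> powr q + \<bar>b\<bar> powr q) / 2) powr ((\<gamma> - 1) / q)"
      using assms by (intro mult_right_mono mult_left_mono) auto
    finally show ?thesis .
  qed
  show ?thesis
  proof (cases "\<bar>b\<bar> \<le> \<bar>a\<bar>")
    case True then show ?thesis using key by blast
  next
    case False
    then have "\<bar>a\<bar> \<le> \<bar>b\<bar>" by simp
    from key[OF this] show ?thesis by (simp add: abs_minus_commute add.commute)
  qed
qed

lemma holder_sum:
  fixes c f h :: "'a \<Rightarrow> real" and P Q :: real
  assumes fin: "finite I" and nn: "\<And>i. i \<in> I \<Longrightarrow> c i \<ge> 0 \<and> f i \<ge> 0 \<and> h i \<ge> 0"
    and PQ: "P > 1" "Q > 1" "1/P + 1/Q = 1"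
  shows "(\<Sum>i\<in>I. c i * f i * h i) \<le> (\<Sum>i\<in>I. c i * f i powr P) powr (1/P) * (\<Sum>i\<in>I. c i * h i powr Q) powr (1/Q)"
proof -
  define F where "F = (\<Sum>i\<in>I. c i * f i powr P)"
  define H where "H = (\<Sum>i\<in>I. c i * h i powr Q)"
  have F0: "F \<ge> 0" "H \<ge> 0" using nn by (auto simp: F_def H_def intro!: sum_nonneg)
  show ?thesis
  proof (cases "F = 0 \<or> H = 0")
    case True
    have "c i * f i * h i = 0" if i: "i \<in> I" for i
    proof -
      from True show ?thesis
      proof
        assume "F = 0"
        then have "c i * f i powr P = 0"
          using sum_nonneg_eq_0_iff[OF fin, of "\<lambda>i. c i * f i powr P"] nn i by (auto simp: F_def)
        then show ?thesis by auto
      next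
        assume "H = 0"
        then have "c i * h i powr Q = 0"
          using sum_nonneg_eq_0_iff[OF fin, of "\<lambda>i. c i * h i powr Q"] nn i by (auto simp: H_def)
        then show ?thesis by auto
      qed
    qed
    then have "(\<Sum>i\<in>I. c i * f i * h i) = 0" by (intro sum.neutral) blast
    then show ?thesis using F0 by (simp add: F_def[symmetric] H_def[symmetric])
  next
    case False
    then have Fp: "F > 0" "H > 0" using F0 by auto
    define a where "a = F powr (1/P)"
    define b where "b = H powr (1/Q)"
    have ab: "a > 0" "b > 0" using Fp by (auto simp: a_def b_def)
    have aP: "a powr P = F" using Fp PQ by (simp add: a_def powr_powr)
    have bQ: "b powr Q = H" using Fp PQ by (simp add: b_def powr_powr)
    have y: "c i * (f i / a) * (h i / b) \<le> c i * ((f i powr P / F) / P + (h i powr Q / H) / Q)"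
      if i: "i \<in> I" for i
    proof -
      have "(f i / a) * (h i / b) \<le> (f i / a) powr P / P + (h i / b) powr Q / Q"
        using Youngs_inequality[OF PQ, of "f i / a" "h i / b"] nn[OF i] ab by simp
      also have "\<dots> = (f i powr P / F) / P + (h i powr Q / H) / Q"
        using ab nn[OF i] by (simp add: powr_divide aP bQ)
      finally show ?thesis using nn[OF i] by (metis mult_left_mono times_divide_eq_right mult.assoc)
    qed
    have "(\<Sum>i\<in>I. c i * f i * h i) / (a * b) = (\<Sum>i\<in>I. c i * (f i / a) * (h i / b))"
      by (simp add: sum_divide_distrib)
    also have "\<dots> \<le> (\<Sum>i\<in>I. c i * ((f i powr P / F) / P + (h i powr Q / H) / Q))"
      by (rule sum_mono) (rule y)
    also have "\<dots> = (\<Sum>i\<in>I. c i * f i powr P) / F / P + (\<Sum>i\<in>I. c i * h i powr Q) / H / Q"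
      by (simp add: algebra_simps sum.distrib sum_divide_distrib)
    also have "\<dots> = 1" using Fp PQ by (simp add: F_def[symmetric] H_def[symmetric])
    finally have "(\<Sum>i\<in>I. c i * f i * h i) \<le> a * b" using ab by (simp add: divide_le_eq)
    then show ?thesis by (simp add: a_def b_def F_def H_def)
  qed
qed

definition cross :: "('e \<Rightarrow> 'v) \<Rightarrow> ('e \<Rightarrow> 'v) \<Rightarrow> 'v set \<Rightarrow> 'e \<Rightarrow> real" where
  "cross ea eb S e = \<bar>of_bool (eb e \<in> S) - of_bool (ea e \<in> S)\<bar>"

lemma layer_lemma:
  fixes m g y :: "'v \<Rightarrow> real" and w :: "'e \<Rightarrow> real" and ea eb :: "'e \<Rightarrow> 'v"
  assumes finV: "finite V0" and finE: "finite E0"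
    and w: "\<And>e. e \<in> E0 \<Longrightarrow> w e \<ge> 0" and C: "C \<ge> 0"
    and hyp: "\<And>S. S \<subseteq> V0 \<Longrightarrow> S \<noteq> {} \<Longrightarrow>
                (\<Sum>v\<in>S. m v * g v) \<le> C * (\<Sum>e\<in>E0. w e * cross ea eb S e)"
  shows "(\<forall>v. y v \<ge> 0) \<Longrightarrow> (\<forall>v. y v > 0 \<longrightarrow> v \<in> V0) \<Longrightarrow>
     (\<Sum>v\<in>V0. m v * y v * g v) \<le> C * (\<Sum>e\<in>E0. w e * \<bar>y (eb e) - y (ea e)\<bar>)"
proof (induction "card (y ` {v\<in>V0. y v > 0})" arbitrary: y rule: less_induct)
  case less
  note y0 = less.prems(1) and ysupp = less.prems(2)
  define T where "T = y ` {v\<in>V0. y v > 0}"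
  have finT: "finite T" using finV by (simp add: T_def)
  show ?case
  proof (cases "T = {}")
    case True
    then have "y v = 0" for v using y0 ysupp by (auto simp: T_def) (metis less_eq_real_def)
    then show ?thesis using C w by (simp add: sum_nonneg)
  next
    case False
    define y1 where "y1 = Min T"
    have y1T: "y1 \<in> T" using False finT by (simp add: y1_def)
    then have y1p: "y1 > 0" by (auto simp: T_def)
    have y1le: "y1 \<le> y v" if "y v > 0" for v
      using that ysupp finT by (auto simp: y1_def T_def intro!: Min_le)
    define S1 where "S1 = {v\<in>V0. y v > 0}"
    have S1iff: "v \<in> S1 \<longleftrightarrow> y v > 0" for v using ysupp by (auto simp: S1_def)
    define y' where "y' = (\<lambda>v. max (y v - y1) 0)"
    have decomp: "y v = y1 * of_bool (v \<in> S1) + y' v" for v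
      using y1le[of v] y0[rule_format, of v] S1iff[of v] y1p by (auto simp: y'_def)
    have y'0: "\<forall>v. y' v \<ge> 0" by (simp add: y'_def)
    have y'supp: "\<forall>v. y' v > 0 \<longrightarrow> v \<in> V0"
      using ysupp y1p by (auto simp: y'_def)
    have sub: "y' ` {v\<in>V0. y' v > 0} \<subseteq> (\<lambda>t. t - y1) ` (T - {y1})"
    proof
      fix x assume "x \<in> y' ` {v\<in>V0. y' v > 0}"
      then obtain v where v: "v \<in> V0" "y' v > 0" "x = y' v" by auto
      then have "y v > y1" by (auto simp: y'_def)
      then have "y v \<in> T - {y1}" "x = y v - y1" using v y1p by (auto simp: T_def y'_def)
      then show "x \<in> (\<lambda>t. t - y1) ` (T - {y1})" by blast
    qed
    have "card (y' ` {v\<in>V0. y' v > 0}) \<le> card ((\<lambda>t. t - y1) ` (T - {y1}))"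
      by (rule card_mono) (use finT sub in auto)
    also have "\<dots> \<le> card (T - {y1})" by (rule card_image_le) (use finT in auto)
    also have "\<dots> < card T" using finT y1T by (metis card_Diff1_less)
    finally have lt: "card (y' ` {v\<in>V0. y' v > 0}) < card T" .
    have IH: "(\<Sum>v\<in>V0. m v * y' v * g v) \<le> C * (\<Sum>e\<in>E0. w e * \<bar>y' (eb e) - y' (ea e)\<bar>)"
      using less.hyps[OF lt[unfolded T_def] y'0 y'supp] .
    have S1sub: "S1 \<subseteq> V0" "S1 \<noteq> {}" using False by (auto simp: S1_def T_def)
    have H1: "(\<Sum>v\<in>S1. m v * g v) \<le> C * (\<Sum>e\<in>E0. w e * cross ea eb S1 e)"
      using hyp[OF S1sub] .
    have edge: "\<bar>y (eb e) - y (ea e)\<bar> = y1 * cross ea eb S1 e + \<bar>y' (eb e) - y' (ea e)\<bar>" for e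
      using decomp[of "eb e"] decomp[of "ea e"] S1iff[of "eb e"] S1iff[of "ea e"] y1p
        y'0[rule_format, of "eb e"] y'0[rule_format, of "ea e"]
      by (auto simp: cross_def y'_def)
    have "(\<Sum>v\<in>V0. m v * y v * g v) = (\<Sum>v\<in>V0. y1 * (of_bool (v \<in> S1) * (m v * g v)) + m v * y' v * g v)"
      by (intro sum.cong refl) (simp add: decomp[of _] algebra_simps)
    also have "\<dots> = y1 * (\<Sum>v\<in>V0. of_bool (v \<in> S1) * (m v * g v)) + (\<Sum>v\<in>V0. m v * y' v * g v)"
      by (simp add: sum.distrib sum_distrib_left)
    also have "(\<Sum>v\<in>V0. of_bool (v \<in> S1) * (m v * g v)) = (\<Sum>v\<in>S1. m v * g v)"
    proof -
      have "(\<Sum>v\<in>V0. of_bool (v \<in> S1) * (m v * g v)) = (\<Sum>v\<in>V0. if v \<in> S1 then m v * g v else 0)"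
        by (intro sum.cong) auto
      also have "\<dots> = (\<Sum>v\<in>V0 \<inter> S1. m v * g v)" using finV by (simp add: sum.inter_restrict)
      finally show ?thesis using S1sub by (simp add: Int_absorb1)
    qed
    also have "y1 * (\<Sum>v\<in>S1. m v * g v) + (\<Sum>v\<in>V0. m v * y' v * g v)
        \<le> y1 * (C * (\<Sum>e\<in>E0. w e * cross ea eb S1 e)) + C * (\<Sum>e\<in>E0. w e * \<bar>y' (eb e) - y' (ea e)\<bar>)"
      using H1 IH y1p by (intro add_mono mult_left_mono) auto
    also have "\<dots> = C * (\<Sum>e\<in>E0. w e * \<bar>y (eb e) - y (ea e)\<bar>)"
      by (simp add: edge algebra_simps sum.distrib sum_distrib_left)
    finally show ?thesis .
  qed
qed

lemma disc_sob1:
  fixes m y :: "'v \<Rightarrow> real" and w :: "'e \<Rightarrow> real" and ea eb :: "'e \<Rightarrow> 'v"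
  assumes finV: "finite V0" and finE: "finite E0"
    and m: "\<And>v. v \<in> V0 \<Longrightarrow> m v \<ge> 0"
    and w: "\<And>e. e \<in> E0 \<Longrightarrow> w e \<ge> 0" and K: "K > 0"
    and rn: "r > 1" "\<nu> > 1" "1/r + 1/\<nu> = 1"
    and iso: "\<And>S. S \<subseteq> V0 \<Longrightarrow> S \<noteq> {} \<Longrightarrow>
                K * (\<Sum>v\<in>S. m v) powr (1/r) \<le> (\<Sum>e\<in>E0. w e * cross ea eb S e)"
    and y0: "\<forall>v. y v \<ge> 0" and ysupp: "\<forall>v. y v > 0 \<longrightarrow> v \<in> V0"
  shows "K * (\<Sum>v\<in>V0. m v * y v powr r) powr (1/r) \<le> (\<Sum>e\<in>E0. w e * \<bar>y (eb e) - y (ea e)\<bar>)"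
proof -
  define N where "N = (\<Sum>v\<in>V0. m v * y v powr r) powr (1/r)"
  have RHS0: "0 \<le> (\<Sum>e\<in>E0. w e * \<bar>y (eb e) - y (ea e)\<bar>)" using w by (auto intro!: sum_nonneg)
  have Nr: "N powr r = (\<Sum>v\<in>V0. m v * y v powr r)"
    using rn m by (simp add: N_def powr_powr sum_nonneg)
  show ?thesis
  proof (cases "N = 0")
    case True then show ?thesis using RHS0 by (simp add: N_def)
  next
    case False
    then have Np: "N > 0" by (simp add: N_def)
    define g where "g = (\<lambda>v. y v powr (r - 1) / N powr (r - 1))"
    have g0: "g v \<ge> 0" for v by (simp add: g_def)
    have rnu: "(r - 1) * \<nu> = r" using rn by (simp add: field_simps)
    have gnu: "g v powr \<nu> = y v powr r / N powr r" for v
      using y0 Np rn by (simp add: g_def powr_divide powr_powr rnu)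
    have sumg: "(\<Sum>v\<in>V0. m v * g v powr \<nu>) = 1"
      using Np Nr by (simp add: gnu sum_divide_distrib[symmetric]) (metis powr_gt_zero less_irrefl)
    have hyp: "(\<Sum>v\<in>S. m v * g v) \<le> (1/K) * (\<Sum>e\<in>E0. w e * cross ea eb S e)"
      if S: "S \<subseteq> V0" "S \<noteq> {}" for S
    proof -
      have finS: "finite S" using S finV finite_subset by blast
      have "(\<Sum>v\<in>S. m v * g v) = (\<Sum>v\<in>S. m v * 1 * g v)" by simp
      also have "\<dots> \<le> (\<Sum>v\<in>S. m v * 1 powr r) powr (1/r) * (\<Sum>v\<in>S. m v * g v powr \<nu>) powr (1/\<nu>)"
        by (rule holder_sum[OF finS _ rn]) (use S m g0 in auto)
      also have "\<dots> = (\<Sum>v\<in>S. m v) powr (1/r) * (\<Sum>v\<in>S. m v * g v powr \<nu>) powr (1/\<nu>)"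
        by simp
      also have "\<dots> \<le> (\<Sum>v\<in>S. m v) powr (1/r) * 1"
      proof (rule mult_left_mono)
        have "(\<Sum>v\<in>S. m v * g v powr \<nu>) \<le> (\<Sum>v\<in>V0. m v * g v powr \<nu>)"
          by (rule sum_mono2[OF finV S(1)]) (use m S in auto)
        then have X1: "(\<Sum>v\<in>S. m v * g v powr \<nu>) \<le> 1" using sumg by simp
        have X0: "0 \<le> (\<Sum>v\<in>S. m v * g v powr \<nu>)" using m S by (auto intro!: sum_nonneg)
        have "(\<Sum>v\<in>S. m v * g v powr \<nu>) powr (1/\<nu>) \<le> 1 powr (1/\<nu>)"
          by (rule powr_mono2) (use rn X0 X1 in auto)
        then show "(\<Sum>v\<in>S. m v * g v powr \<nu>) powr (1/\<nu>) \<le> 1" by simp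
      qed simp
      also have "\<dots> \<le> (1/K) * (\<Sum>e\<in>E0. w e * cross ea eb S e)"
        using iso[OF S] K by (simp add: field_simps)
      finally show ?thesis .
    qed
    have LL: "(\<Sum>v\<in>V0. m v * y v * g v) \<le> (1/K) * (\<Sum>e\<in>E0. w e * \<bar>y (eb e) - y (ea e)\<bar>)"
      by (rule layer_lemma[OF finV finE w _ hyp y0 ysupp]) (use K in auto)
    have yy: "y v * y v powr (r - 1) = y v powr r" for v
    proof (cases "y v = 0")
      case True then show ?thesis using rn by simp
    next
      case False then have "y v > 0" using y0 by (simp add: less_le)
      then show ?thesis by (simp add: powr_diff)
    qed
    have "(\<Sum>v\<in>V0. m v * y v * g v) = (\<Sum>v\<in>V0. m v * y v powr r) / N powr (r - 1)"
      by (simp add: g_def sum_divide_distrib mult.assoc yy)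
    also have "\<dots> = N" using Np rn by (simp add: Nr[symmetric] powr_diff)
    finally have "N \<le> (1/K) * (\<Sum>e\<in>E0. w e * \<bar>y (eb e) - y (ea e)\<bar>)" using LL by simp
    then show ?thesis using K by (simp add: N_def[symmetric] field_simps)
  qed
qed

lemma double_count:
  fixes h :: "'v \<Rightarrow> real" and c :: "'e \<Rightarrow> real"
  assumes finV: "finite V0" and finE: "finite E1"
    and dist: "\<And>e. e \<in> E1 \<Longrightarrow> ea e \<noteq> eb e"
    and h0: "\<And>v. v \<notin> V0 \<Longrightarrow> h v = 0"
  shows "(\<Sum>e\<in>E1. c e * (h (ea e) + h (eb e))) =
         (\<Sum>v\<in>V0. h v * (\<Sum>e\<in>{e\<in>E1. ea e = v \<or> eb e = v}. c e))"
proof -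
  have "(\<Sum>e\<in>E1. c e * (h (ea e) + h (eb e))) = (\<Sum>e\<in>E1. \<Sum>v\<in>V0. of_bool (ea e = v \<or> eb e = v) * (c e * h v))"
  proof (rule sum.cong[OF refl])
    fix e assume e: "e \<in> E1"
    have "(\<Sum>v\<in>V0. of_bool (ea e = v \<or> eb e = v) * (c e * h v)) =
          (\<Sum>v\<in>V0. (if v = ea e then c e * h v else 0) + (if v = eb e then c e * h v else 0))"
      using dist[OF e] by (intro sum.cong) auto
    also have "\<dots> = (if ea e \<in> V0 then c e * h (ea e) else 0) + (if eb e \<in> V0 then c e * h (eb e) else 0)"
      using finV by (simp only: sum.distrib sum.delta)
    also have "\<dots> = c e * (h (ea e) + h (eb e))"
      using h0[of "ea e"] h0[of "eb e"] by (auto simp: algebra_simps)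
    finally show "c e * (h (ea e) + h (eb e)) = (\<Sum>v\<in>V0. of_bool (ea e = v \<or> eb e = v) * (c e * h v))" ..
  qed
  also have "\<dots> = (\<Sum>v\<in>V0. \<Sum>e\<in>E1. of_bool (ea e = v \<or> eb e = v) * (c e * h v))"
    by (rule sum.swap)
  also have "\<dots> = (\<Sum>v\<in>V0. h v * (\<Sum>e\<in>{e\<in>E1. ea e = v \<or> eb e = v}. c e))"
  proof (rule sum.cong[OF refl])
    fix v
    have "(\<Sum>e\<in>E1. of_bool (ea e = v \<or> eb e = v) * (c e * h v)) =
          (\<Sum>e\<in>E1. if ea e = v \<or> eb e = v then h v * c e else 0)"
      by (intro sum.cong) auto
    also have "\<dots> = (\<Sum>e\<in>{e\<in>E1. ea e = v \<or> eb e = v}. h v * c e)"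
      using finE by (simp add: sum.inter_filter)
    finally show "(\<Sum>e\<in>E1. of_bool (ea e = v \<or> eb e = v) * (c e * h v)) =
          h v * (\<Sum>e\<in>{e\<in>E1. ea e = v \<or> eb e = v}. c e)" by (simp add: sum_distrib_left)
  qed
  finally show ?thesis .
qed

lemma disc_sob_p:
  fixes m x :: "'v \<Rightarrow> real" and w L :: "'e \<Rightarrow> real" and ea eb :: "'e \<Rightarrow> 'v"
    and p \<nu> K R :: real
  assumes finV: "finite V0" and finE: "finite E0"
    and m: "\<And>v. v \<in> V0 \<Longrightarrow> m v \<ge> 0"
    and w: "\<And>e. e \<in> E0 \<Longrightarrow> w e \<ge> 0" and L: "\<And>e. e \<in> E0 \<Longrightarrow> L e > 0"
    and K: "K > 0" and p: "p > 1" "p < \<nu>"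
    and iso: "\<And>S. S \<subseteq> V0 \<Longrightarrow> S \<noteq> {} \<Longrightarrow>
                K * (\<Sum>v\<in>S. m v) powr (1 - 1/\<nu>) \<le> (\<Sum>e\<in>E0. w e * cross ea eb S e)"
    and xsupp: "\<forall>v. x v \<noteq> 0 \<longrightarrow> v \<in> V0"
    and R: "R \<ge> 0" "\<And>v. v \<in> V0 \<Longrightarrow>
       (\<Sum>e\<in>{e\<in>E0. ea e \<noteq> eb e \<and> (ea e = v \<or> eb e = v)}. w e * L e / 2) \<le> R * m v"
  shows "K * (\<Sum>v\<in>V0. m v * \<bar>x v\<bar> powr (p * \<nu> / (\<nu> - p))) powr (1 / (p * \<nu> / (\<nu> - p)))
     \<le> (p * (\<nu> - 1) / (\<nu> - p)) * R powr ((p - 1) / p) *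
        (\<Sum>e\<in>E0. w e * (L e powr (1 - p) * \<bar>x (eb e) - x (ea e)\<bar> powr p)) powr (1 / p)"
proof -
  define q where "q = p * \<nu> / (\<nu> - p)"
  define \<gamma> where "\<gamma> = p * (\<nu> - 1) / (\<nu> - p)"
  define r where "r = \<nu> / (\<nu> - 1)"
  define b where "b = (p - 1) / p"
  define p' where "p' = p / (p - 1)"
  have nu1: "\<nu> > 1" using p by simp
  have nz: "\<nu> - 1 \<noteq> 0" "\<nu> - p \<noteq> 0" "p \<noteq> 0" "p - 1 \<noteq> 0" using p by auto
  have r1: "r > 1" using nu1 by (simp add: r_def)
  have rnu: "1/r + 1/\<nu> = 1" using nu1 by (simp add: r_def field_simps)
  have rinv: "1/r = 1 - 1/\<nu>" using nu1 by (simp add: r_def field_simps)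
  have q1: "q \<ge> 1"
  proof -
    have "p * \<nu> \<ge> 1 * \<nu>" using p nu1 by (intro mult_right_mono) auto
    then have "\<nu> - p \<le> p * \<nu>" using p by linarith
    then show ?thesis using p by (simp add: q_def le_divide_eq)
  qed
  have qpos: "q > 0" using q1 by simp
  have g1: "\<gamma> > 1" using p by (simp add: \<gamma>_def field_simps)
  have nz2: "\<nu> \<noteq> 0" using nu1 by simp
  have gr: "\<gamma> * r = q" using nz nz2 unfolding \<gamma>_def r_def q_def by (simp add: divide_simps)
  have gq: "(\<gamma> - 1) / q = b" using nz nz2 unfolding \<gamma>_def q_def b_def by (simp add: divide_simps) (simp add: algebra_simps)
  have b01: "0 < b" "b < 1" using p by (auto simp: b_def field_simps)
  have p'1: "p' > 1" "1/p + 1/p' = 1" using p by (auto simp: p'_def field_simps)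
  have bp': "b * p' = 1" using p by (simp add: b_def p'_def)
  have rq: "1/r = 1/q + b" using nz nz2 unfolding r_def q_def b_def by (simp add: divide_simps) (simp add: algebra_simps)
  define y where "y = (\<lambda>v. \<bar>x v\<bar> powr \<gamma>)"
  have y0: "\<forall>v. y v \<ge> 0" by (simp add: y_def)
  have ysupp: "\<forall>v. y v > 0 \<longrightarrow> v \<in> V0" using xsupp by (auto simp: y_def)
  define Q where "Q = (\<Sum>v\<in>V0. m v * \<bar>x v\<bar> powr q)"
  define D where "D = (\<Sum>e\<in>E0. w e * (L e powr (1 - p) * \<bar>x (eb e) - x (ea e)\<bar> powr p))"
  have Q0: "Q \<ge> 0" using m by (auto simp: Q_def intro!: sum_nonneg)
  have D0: "D \<ge> 0" using w by (auto simp: D_def intro!: sum_nonneg)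
  have A1: "K * Q powr (1/r) \<le> (\<Sum>e\<in>E0. w e * \<bar>y (eb e) - y (ea e)\<bar>)"
  proof -
    have "K * (\<Sum>v\<in>V0. m v * y v powr r) powr (1/r) \<le> (\<Sum>e\<in>E0. w e * \<bar>y (eb e) - y (ea e)\<bar>)"
      by (rule disc_sob1[OF finV finE m w K r1 nu1 rnu _ y0 ysupp]) (use iso rinv in auto)
    moreover have "y v powr r = \<bar>x v\<bar> powr q" for v by (simp add: y_def powr_powr gr)
    ultimately show ?thesis by (simp add: Q_def)
  qed
  define E1 where "E1 = {e\<in>E0. ea e \<noteq> eb e}"
  have finE1: "finite E1" using finE by (simp add: E1_def)
  define W where "W = (\<lambda>e. ((\<bar>x (ea e)\<bar> powr q + \<bar>x (eb e)\<bar> powr q) / 2) powr b)"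
  have A2: "(\<Sum>e\<in>E0. w e * \<bar>y (eb e) - y (ea e)\<bar>) = (\<Sum>e\<in>E1. w e * \<bar>y (eb e) - y (ea e)\<bar>)"
    by (rule sum.mono_neutral_right[OF finE]) (auto simp: E1_def)
  have A3: "(\<Sum>e\<in>E1. w e * \<bar>y (eb e) - y (ea e)\<bar>) \<le>
      \<gamma> * (\<Sum>e\<in>E1. w e * (L e powr (- b) * \<bar>x (eb e) - x (ea e)\<bar>) * (L e powr b * W e))"
  proof -
    have "(\<Sum>e\<in>E1. w e * \<bar>y (eb e) - y (ea e)\<bar>) \<le> (\<Sum>e\<in>E1. w e * (\<gamma> * \<bar>x (eb e) - x (ea e)\<bar> * W e))"
    proof (rule sum_mono)
      fix e assume e: "e \<in> E1"
      have "\<bar>y (eb e) - y (ea e)\<bar> \<le> \<gamma> * \<bar>x (eb e) - x (ea e)\<bar> * W e"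
        using pw_abs[OF g1 q1, of "x (eb e)" "x (ea e)"] gq b01
        by (simp add: y_def W_def add.commute)
      then show "w e * \<bar>y (eb e) - y (ea e)\<bar> \<le> w e * (\<gamma> * \<bar>x (eb e) - x (ea e)\<bar> * W e)"
        using w e by (intro mult_left_mono) (auto simp: E1_def)
    qed
    also have "\<dots> = \<gamma> * (\<Sum>e\<in>E1. w e * (L e powr (- b) * \<bar>x (eb e) - x (ea e)\<bar>) * (L e powr b * W e))"
    proof -
      have "L e powr (- b) * L e powr b = 1" if "e \<in> E1" for e
        using L[of e] that by (simp add: E1_def flip: powr_add)
      then have "w e * (\<gamma> * \<bar>x (eb e) - x (ea e)\<bar> * W e) =
          \<gamma> * (w e * (L e powr (- b) * \<bar>x (eb e) - x (ea e)\<bar>) * (L e powr b * W e))" if "e \<in> E1" for e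
        using that by (simp add: algebra_simps)
      then show ?thesis
        by (simp only: sum_distrib_left) (rule sum.cong[OF refl], blast)
    qed
    finally show ?thesis .
  qed
  have A5: "(\<Sum>e\<in>E1. w e * (L e powr (- b) * \<bar>x (eb e) - x (ea e)\<bar>) * (L e powr b * W e))
     \<le> (\<Sum>e\<in>E1. w e * (L e powr (- b) * \<bar>x (eb e) - x (ea e)\<bar>) powr p) powr (1/p)
       * (\<Sum>e\<in>E1. w e * (L e powr b * W e) powr p') powr (1/p')"
    by (rule holder_sum[OF finE1 _ p(1) p'1]) (use w in \<open>auto simp: E1_def W_def\<close>)
  have A6: "(\<Sum>e\<in>E1. w e * (L e powr (- b) * \<bar>x (eb e) - x (ea e)\<bar>) powr p) \<le> D"
  proof -
    have "(L e powr (- b) * \<bar>x (eb e) - x (ea e)\<bar>) powr p = L e powr (1 - p) * \<bar>x (eb e) - x (ea e)\<bar> powr p"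
      if "e \<in> E0" for e
    proof -
      have "(L e powr (- b)) powr p = L e powr (1 - p)" using p by (simp add: powr_powr b_def)
      then show ?thesis using L[OF that] by (simp add: powr_mult)
    qed
    then have "(\<Sum>e\<in>E1. w e * (L e powr (- b) * \<bar>x (eb e) - x (ea e)\<bar>) powr p)
        = (\<Sum>e\<in>E1. w e * (L e powr (1 - p) * \<bar>x (eb e) - x (ea e)\<bar> powr p))"
      by (intro sum.cong) (auto simp: E1_def)
    also have "\<dots> \<le> D" unfolding D_def
      by (rule sum_mono2[OF finE]) (use w in \<open>auto simp: E1_def\<close>)
    finally show ?thesis .
  qed
  have A7: "(\<Sum>e\<in>E1. w e * (L e powr b * W e) powr p') \<le> R * Q"
  proof -
    define h where "h = (\<lambda>v. \<bar>x v\<bar> powr q)"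
    have "(L e powr b * W e) powr p' = L e * ((h (ea e) + h (eb e)) / 2)" if "e \<in> E0" for e
    proof -
      have "(L e powr b) powr p' = L e" using bp' L[OF that] by (simp add: powr_powr)
      moreover have "(W e) powr p' = (h (ea e) + h (eb e)) / 2"
        by (simp add: W_def powr_powr bp' h_def)
      ultimately show ?thesis using L[OF that] by (simp add: powr_mult W_def)
    qed
    then have "(\<Sum>e\<in>E1. w e * (L e powr b * W e) powr p') = (\<Sum>e\<in>E1. (w e * L e / 2) * (h (ea e) + h (eb e)))"
      by (intro sum.cong) (auto simp: E1_def)
    also have "\<dots> = (\<Sum>v\<in>V0. h v * (\<Sum>e\<in>{e\<in>E1. ea e = v \<or> eb e = v}. w e * L e / 2))"
      by (rule double_count[OF finV finE1]) (use xsupp qpos in \<open>auto simp: E1_def h_def\<close>)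
    also have "\<dots> \<le> (\<Sum>v\<in>V0. h v * (R * m v))"
    proof (rule sum_mono)
      fix v assume v: "v \<in> V0"
      have "{e\<in>E1. ea e = v \<or> eb e = v} = {e\<in>E0. ea e \<noteq> eb e \<and> (ea e = v \<or> eb e = v)}"
        by (auto simp: E1_def)
      then show "h v * (\<Sum>e\<in>{e\<in>E1. ea e = v \<or> eb e = v}. w e * L e / 2) \<le> h v * (R * m v)"
        using R(2)[OF v] by (intro mult_left_mono) (auto simp: h_def)
    qed
    also have "\<dots> = R * Q" by (simp add: Q_def h_def sum_distrib_left algebra_simps)
    finally show ?thesis .
  qed
  have Sp: "0 \<le> (\<Sum>e\<in>E1. w e * (L e powr b * W e) powr p')" using w by (auto simp: E1_def intro!: sum_nonneg)
  have Sf: "0 \<le> (\<Sum>e\<in>E1. w e * (L e powr (- b) * \<bar>x (eb e) - x (ea e)\<bar>) powr p)" using w by (auto simp: E1_def intro!: sum_nonneg)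
  have main: "K * Q powr (1/r) \<le> \<gamma> * (D powr (1/p) * (R * Q) powr b)"
  proof -
    have "K * Q powr (1/r) \<le> \<gamma> * ((\<Sum>e\<in>E1. w e * (L e powr (- b) * \<bar>x (eb e) - x (ea e)\<bar>) powr p) powr (1/p)
       * (\<Sum>e\<in>E1. w e * (L e powr b * W e) powr p') powr (1/p'))"
      using A1 A2 A3 A5 g1 by (smt (verit) mult_left_mono)
    also have "\<dots> \<le> \<gamma> * (D powr (1/p) * (R * Q) powr b)"
    proof (rule mult_left_mono[OF mult_mono])
      show "(\<Sum>e\<in>E1. w e * (L e powr (- b) * \<bar>x (eb e) - x (ea e)\<bar>) powr p) powr (1/p) \<le> D powr (1/p)"
        using A6 Sf p by (intro powr_mono2) auto
      have "1/p' = b" using p by (simp add: p'_def b_def)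
      then show "(\<Sum>e\<in>E1. w e * (L e powr b * W e) powr p') powr (1/p') \<le> (R * Q) powr b"
        using A7 Sp b01 by (simp add: powr_mono2)
    qed (use g1 D0 R Q0 in auto)
    finally show ?thesis .
  qed
  show ?thesis
  proof (cases "Q = 0")
    case True
    then show ?thesis using R D0 g1 qpos by (simp add: Q_def[symmetric] q_def[symmetric] \<gamma>_def[symmetric])
  next
    case False
    then have Qp: "Q > 0" using Q0 by simp
    have "K * Q powr (1/q) * Q powr b \<le> (\<gamma> * R powr b * D powr (1/p)) * Q powr b"
      using main Qp R by (simp add: rq powr_add powr_mult algebra_simps)
    then have "K * Q powr (1/q) \<le> \<gamma> * R powr b * D powr (1/p)"
      using Qp by (simp add: mult_le_cancel_right)
    then show ?thesis by (simp add: Q_def q_def \<gamma>_def b_def D_def)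
  qed
qed

lemma tangent_pow:
  fixes x B p :: real
  assumes "p \<ge> 1" "B > 0" "x \<ge> 0"
  shows "B powr p + p * B powr (p - 1) * (x - B) \<le> x powr p"
proof -
  have "(x powr p) powr (1/p) \<le> (B powr p) powr (1/p) + (1/p) * (B powr p) powr (1/p - 1) * (x powr p - B powr p)"
    by (rule young_tangent) (use assms in auto)
  moreover have "(x powr p) powr (1/p) = x" using assms by (simp add: powr_powr)
  moreover have "(B powr p) powr (1/p) = B" using assms by (simp add: powr_powr)
  moreover have "(B powr p) powr (1/p - 1) = B powr (1 - p)" using assms
    by (simp add: powr_powr algebra_simps)
  ultimately have "x \<le> B + (1/p) * B powr (1 - p) * (x powr p - B powr p)" by simp
  then have "p * B powr (p - 1) * (x - B) \<le> p * B powr (p - 1) * ((1/p) * B powr (1 - p) * (x powr p - B powr p))"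
    using assms by (intro mult_left_mono) auto
  also have "\<dots> = x powr p - B powr p"
  proof -
    have "B powr (p - 1) * B powr (1 - p) = 1" using assms by (simp flip: powr_add)
    then show ?thesis using assms
      by (metis (no_types, lifting) divide_self_if mult.assoc mult.left_commute mult_1 not_one_le_zero times_divide_eq_left)
  qed
  finally show ?thesis by simp
qed

lemma edge_grad_bound:
  fixes f f' :: "real \<Rightarrow> real" and L p :: real
  assumes L: "L > 0" and p: "p \<ge> 1"
    and cont: "continuous_on {0..L} f"
    and der: "\<And>t. t \<in> {0<..<L} \<Longrightarrow> (f has_real_derivative f' t) (at t)"
    and uc: "uniformly_continuous_on {0<..<L} f'"
  shows "L powr (1 - p) * \<bar>f L - f 0\<bar> powr p \<le> integral {0..L} (\<lambda>t. \<bar>deriv f t\<bar> powr p)"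
proof -
  obtain g where g: "uniformly_continuous_on (closure {0<..<L}) g" "\<And>x. x \<in> {0<..<L} \<Longrightarrow> f' x = g x"
    using uniformly_continuous_on_extension_on_closure[OF uc] by metis
  have cl: "closure {0<..<L} = {0..L}" using L by simp
  have gc: "continuous_on {0..L} g" using g(1) cl uniformly_continuous_imp_continuous by metis
  have dg: "deriv f t = g t" if "t \<in> {0<..<L}" for t
    using DERIV_imp_deriv[OF der[OF that]] g(2)[OF that] by simp
  have "integral {0..L} (\<lambda>t. \<bar>deriv f t\<bar> powr p) = integral {0..L} (\<lambda>t. \<bar>g t\<bar> powr p)"
    by (rule integral_spike[of "{0, L}"]) (auto simp: dg)
  moreover
  have ftc: "(g has_integral (f L - f 0)) {0..L}"
  proof (rule fundamental_theorem_of_calculus_interior)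
    fix x assume "x \<in> {0<..<L}"
    then show "(f has_vector_derivative g x) (at x)"
      using der g(2) by (simp add: has_real_derivative_iff_has_vector_derivative[symmetric])
  qed (use L cont in auto)
  define I where "I = integral {0..L} (\<lambda>t. \<bar>g t\<bar>)"
  have int_abs: "(\<lambda>t. \<bar>g t\<bar>) integrable_on {0..L}"
    by (rule integrable_continuous_interval) (intro continuous_intros gc)
  have int_p: "(\<lambda>t. \<bar>g t\<bar> powr p) integrable_on {0..L}"
    by (rule integrable_continuous_interval)
       (rule continuous_on_powr'[OF continuous_on_rabs[OF gc] continuous_on_const], use p in auto)
  have dI: "\<bar>f L - f 0\<bar> \<le> I"
  proof -
    have "norm (integral {0..L} g) \<le> I" unfolding I_def
      by (rule integral_norm_bound_integral) (use ftc int_abs in auto)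
    then show ?thesis using ftc by (simp add: integral_unique)
  qed
  have I0: "I \<ge> 0" using dI by simp
  have main: "L powr (1 - p) * I powr p \<le> integral {0..L} (\<lambda>t. \<bar>g t\<bar> powr p)"
  proof (cases "I = 0")
    case True
    have "0 \<le> integral {0..L} (\<lambda>t. \<bar>g t\<bar> powr p)"
      by (rule integral_nonneg[OF int_p]) simp
    then show ?thesis using True p by simp
  next
    case False
    then have Ip: "I > 0" using I0 by simp
    define B where "B = I / L"
    have Bp: "B > 0" using Ip L by (simp add: B_def)
    have lin_int: "((\<lambda>t. B powr p + p * B powr (p - 1) * (\<bar>g t\<bar> - B)) has_integral
        (L * B powr p + p * B powr (p - 1) * (I - L * B))) {0..L}"
    proof -
      have "((\<lambda>t. \<bar>g t\<bar> - B) has_integral (I - L * B)) {0..L}"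
        using has_integral_diff[OF int_abs[unfolded has_integral_integral] has_integral_const_real[of B 0 L]] L
        by (simp add: I_def)
      from has_integral_mult_right[OF this, of "p * B powr (p - 1)"]
      have "((\<lambda>t. p * B powr (p - 1) * (\<bar>g t\<bar> - B)) has_integral (p * B powr (p - 1) * (I - L * B))) {0..L}" .
      from has_integral_add[OF has_integral_const_real[of "B powr p" 0 L] this]
      show ?thesis using L by simp
    qed
    have "L * B powr p + p * B powr (p - 1) * (I - L * B) \<le> integral {0..L} (\<lambda>t. \<bar>g t\<bar> powr p)"
      by (rule has_integral_le[OF lin_int int_p[unfolded has_integral_integral]])
         (rule tangent_pow[OF p Bp], simp)
    moreover have "I - L * B = 0" using L by (simp add: B_def)
    moreover have "L * B powr p = L powr (1 - p) * I powr p"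
      using L Ip by (simp add: B_def powr_divide powr_diff field_simps)
    ultimately show ?thesis by simp
  qed
  have "L powr (1 - p) * \<bar>f L - f 0\<bar> powr p \<le> L powr (1 - p) * I powr p"
    using dI p by (intro mult_left_mono powr_mono2) auto
  ultimately show ?thesis using main by simp
qed

definition inside :: "('v,'e) mgraph \<Rightarrow> 'v set \<Rightarrow> 'e \<Rightarrow> real \<Rightarrow> bool" where
  "inside G S e t \<longleftrightarrow> (fst (ends G e) \<in> S \<and> snd (ends G e) \<in> S)
     \<or> (fst (ends G e) \<in> S \<and> t < len G e / 2) \<or> (snd (ends G e) \<in> S \<and> len G e / 2 < t)"

definition OmS :: "('v,'e) mgraph \<Rightarrow> 'v set \<Rightarrow> ('v,'e) gpoint set" where
  "OmS G S = Vx ` S \<union> {Ed e t | e t. e \<in> edges G \<and> 0 < t \<and> t < len G e \<and> inside G S e t}"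

definition crossE :: "('v,'e) mgraph \<Rightarrow> 'v set \<Rightarrow> 'e set" where
  "crossE G S = {e \<in> edges G. (fst (ends G e) \<in> S) \<noteq> (snd (ends G e) \<in> S)}"

definition Fmid :: "('v,'e) mgraph \<Rightarrow> 'v set \<Rightarrow> ('v,'e) gpoint set" where
  "Fmid G S = (\<lambda>e. Ed e (len G e / 2)) ` crossE G S"

definition CS :: "('v,'e) mgraph \<Rightarrow> 'v set \<Rightarrow> ('v,'e) gpoint set" where
  "CS G S = pts G - OmS G S - Fmid G S"

lemma mem_OmS_Vx[simp]: "Vx v \<in> OmS G S \<longleftrightarrow> v \<in> S" by (auto simp: OmS_def)
lemma mem_OmS_Ed[simp]: "Ed e t \<in> OmS G S \<longleftrightarrow> e \<in> edges G \<and> 0 < t \<and> t < len G e \<and> inside G S e t"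
  by (auto simp: OmS_def)
lemma mem_Fmid_Vx[simp]: "Vx v \<notin> Fmid G S" by (auto simp: Fmid_def)
lemma mem_Fmid_Ed[simp]: "Ed e t \<in> Fmid G S \<longleftrightarrow> e \<in> crossE G S \<and> t = len G e / 2"
  by (auto simp: Fmid_def)
lemma mem_pts_Vx[simp]: "Vx v \<in> pts G \<longleftrightarrow> v \<in> verts G" by (auto simp: pts_def)
lemma mem_pts_Ed[simp]: "Ed e t \<in> pts G \<longleftrightarrow> e \<in> edges G \<and> 0 < t \<and> t < len G e" by (auto simp: pts_def)

lemma OmS_sub_pts: "S \<subseteq> verts G \<Longrightarrow> OmS G S \<subseteq> pts G"
  by (auto simp: OmS_def)

lemma pre_OmS:
  assumes G: "is_graph G" and e: "e \<in> edges G"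
  shows "{0..len G e} \<inter> param G e -` OmS G S = {0..len G e} \<inter>
     (if fst (ends G e) \<in> S \<and> snd (ends G e) \<in> S then UNIV
      else if fst (ends G e) \<in> S then {..<len G e / 2}
      else if snd (ends G e) \<in> S then {len G e / 2<..} else {})"
proof -
  have L: "len G e > 0" using G e by (auto simp: is_graph_def)
  show ?thesis
    using L e by (auto simp: param_def inside_def split: if_splits)
qed

lemma pre_CS:
  assumes G: "is_graph G" and e: "e \<in> edges G"
  shows "{0..len G e} \<inter> param G e -` CS G S = {0..len G e} \<inter>
     (if fst (ends G e) \<in> S \<and> snd (ends G e) \<in> S then {}
      else if fst (ends G e) \<in> S then {len G e / 2<..}
      else if snd (ends G e) \<in> S then {..<len G e / 2} else UNIV)"
proof -
  have L: "len G e > 0" and ab: "fst (ends G e) \<in> verts G" "snd (ends G e) \<in> verts G"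
    using G e by (auto simp: is_graph_def)
  show ?thesis
    using L ab e by (auto simp: param_def inside_def CS_def crossE_def split: if_splits)
qed

lemma openin_if:
  "openin (top_of_set {0..L}) ({0..L} \<inter> (if P1 then A else if P2 then {..<c} else if P3 then {(c::real)<..} else B))"
  if "open A" "open B"
  using that by (auto intro!: openin_open_Int)

lemma gopen_OmS:
  assumes G: "is_graph G" and S: "S \<subseteq> verts G"
  shows "gopen G (OmS G S)"
  unfolding gopen_def
proof (intro conjI ballI)
  show "OmS G S \<subseteq> pts G" by (rule OmS_sub_pts[OF S])
  fix e assume e: "e \<in> edges G"
  show "openin (top_of_set {0..len G e}) ({0..len G e} \<inter> param G e -` OmS G S)"
    unfolding pre_OmS[OF G e] by (rule openin_if) auto
qed

lemma gopen_CS: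
  assumes G: "is_graph G"
  shows "gopen G (CS G S)"
  unfolding gopen_def
proof (intro conjI ballI)
  show "CS G S \<subseteq> pts G" by (auto simp: CS_def)
  fix e assume e: "e \<in> edges G"
  have "openin (top_of_set {0..len G e}) ({0..len G e} \<inter>
     (if fst (ends G e) \<in> S \<and> snd (ends G e) \<in> S then {}
      else if fst (ends G e) \<in> S then {len G e / 2<..}
      else if snd (ends G e) \<in> S then {..<len G e / 2} else UNIV))"
    by (auto intro!: openin_open_Int)
  then show "openin (top_of_set {0..len G e}) ({0..len G e} \<inter> param G e -` CS G S)"
    unfolding pre_CS[OF G e] .
qed

lemma ginterior_open: "gopen G U \<Longrightarrow> ginterior G U = U"
  by (auto simp: ginterior_def)

lemma Fmid_OmS_disj: "Fmid G S \<inter> OmS G S = {}"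
  by (auto simp: Fmid_def crossE_def inside_def)

lemma gclosure_OmS:
  assumes G: "is_graph G" and S: "S \<subseteq> verts G"
  shows "gclosure G (OmS G S) = OmS G S \<union> Fmid G S"
proof
  show "gclosure G (OmS G S) \<subseteq> OmS G S \<union> Fmid G S"
  proof
    fix x assume x: "x \<in> gclosure G (OmS G S)"
    show "x \<in> OmS G S \<union> Fmid G S"
    proof (rule ccontr)
      assume "x \<notin> OmS G S \<union> Fmid G S"
      then have "x \<in> CS G S" using x by (auto simp: CS_def gclosure_def)
      moreover have "CS G S \<inter> OmS G S = {}" by (auto simp: CS_def)
      ultimately show False using x gopen_CS[OF G, of S] by (auto simp: gclosure_def)
    qed
  qed
next
  show "OmS G S \<union> Fmid G S \<subseteq> gclosure G (OmS G S)"
  proof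
    fix x assume x: "x \<in> OmS G S \<union> Fmid G S"
    show "x \<in> gclosure G (OmS G S)"
    proof (cases "x \<in> OmS G S")
      case True
      then show ?thesis using OmS_sub_pts[OF S] by (auto simp: gclosure_def)
    next
      case False
      then obtain e where e: "e \<in> crossE G S" and xe: "x = Ed e (len G e / 2)"
        using x by (auto simp: Fmid_def)
      have eE: "e \<in> edges G" using e by (simp add: crossE_def)
      have L: "len G e > 0" using G eE by (auto simp: is_graph_def)
      have xp: "x \<in> pts G" using xe eE L by simp
      have "U \<inter> OmS G S \<noteq> {}" if U: "gopen G U" "x \<in> U" for U
      proof -
        have op: "openin (top_of_set {0..len G e}) ({0..len G e} \<inter> param G e -` U)"
          using U eE by (auto simp: gopen_def)
        have mid: "len G e / 2 \<in> {0..len G e} \<inter> param G e -` U"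
          using U xe L by (auto simp: param_def)
        obtain \<epsilon> where \<epsilon>: "\<epsilon> > 0" "\<And>t. t \<in> {0..len G e} \<Longrightarrow> dist t (len G e / 2) < \<epsilon> \<Longrightarrow>
            t \<in> {0..len G e} \<inter> param G e -` U"
          using op mid unfolding openin_euclidean_subtopology_iff by meson
        define d where "d = min \<epsilon> (len G e / 2) / 2"
        have d: "0 < d" "d < \<epsilon>" "d < len G e / 2" using \<epsilon> L by (auto simp: d_def)
        consider "fst (ends G e) \<in> S" "snd (ends G e) \<notin> S" | "fst (ends G e) \<notin> S" "snd (ends G e) \<in> S"
          using e by (auto simp: crossE_def)
        then show ?thesis
        proof cases
          case 1
          define t where "t = len G e / 2 - d"
          have t: "0 < t" "t < len G e" "t < len G e / 2" using d L by (auto simp: t_def)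
          have "t \<in> {0..len G e} \<inter> param G e -` U"
            by (rule \<epsilon>(2)) (use t d in \<open>auto simp: t_def dist_real_def\<close>)
          then have "Ed e t \<in> U" using t by (auto simp: param_def)
          moreover have "Ed e t \<in> OmS G S" using t eE 1 by (auto simp: inside_def)
          ultimately show ?thesis by blast
        next
          case 2
          define t where "t = len G e / 2 + d"
          have t: "0 < t" "t < len G e" "len G e / 2 < t" using d L by (auto simp: t_def)
          have "t \<in> {0..len G e} \<inter> param G e -` U"
            by (rule \<epsilon>(2)) (use t d in \<open>auto simp: t_def dist_real_def\<close>)
          then have "Ed e t \<in> U" using t by (auto simp: param_def)
          moreover have "Ed e t \<in> OmS G S" using t eE 2 by (auto simp: inside_def)
          ultimately show ?thesis by blast
        qed
      qed
      then show ?thesis using xp by (auto simp: gclosure_def)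
    qed
  qed
qed

lemma gfrontier_OmS:
  assumes G: "is_graph G" and S: "S \<subseteq> verts G"
  shows "gfrontier G (OmS G S) = Fmid G S"
  using gclosure_OmS[OF G S] ginterior_open[OF gopen_OmS[OF G S]] Fmid_OmS_disj[of G S]
  by (auto simp: gfrontier_def)

lemma area_OmS:
  assumes G: "is_graph G" and S: "S \<subseteq> verts G"
  shows "area G (OmS G S) = ennreal (\<Sum>e\<in>crossE G S. wt G e)"
proof -
  have inj: "inj_on (\<lambda>e. Ed e (len G e / 2)) (crossE G S)" by (auto simp: inj_on_def)
  have "area G (OmS G S) = (\<Sum>x\<in>Fmid G S. bweight G (OmS G S) x)"
    by (simp add: area_def gfrontier_OmS[OF G S])
  also have "\<dots> = (\<Sum>e\<in>crossE G S. ennreal (wt G e))"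
    unfolding Fmid_def by (simp add: sum.reindex[OF inj] bweight_def)
  also have "\<dots> = ennreal (\<Sum>e\<in>crossE G S. wt G e)"
    using G by (intro sum_ennreal) (auto simp: is_graph_def crossE_def less_imp_le)
  finally show ?thesis .
qed

lemma vol_OmS:
  assumes G: "is_graph G" and S: "S \<subseteq> verts G" and fin: "finite S"
  shows "vol G (OmS G S) = ennreal (\<Sum>v\<in>S. vmeas G v)"
proof -
  have "{v \<in> verts G. Vx v \<in> OmS G S} = S" using S by auto
  then have "vol G (OmS G S) = (\<Sum>v\<in>S. ennreal (vmeas G v))" using fin by (simp add: vol_def)
  also have "\<dots> = ennreal (\<Sum>v\<in>S. vmeas G v)"
    using G S by (intro sum_ennreal) (auto simp: is_graph_def less_imp_le)
  finally show ?thesis .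
qed

lemma cross_sum:
  assumes "crossE G S \<subseteq> E0" "E0 \<subseteq> edges G" "finite E0"
  shows "(\<Sum>e\<in>crossE G S. wt G e) = (\<Sum>e\<in>E0. wt G e * cross (\<lambda>e. fst (ends G e)) (\<lambda>e. snd (ends G e)) S e)"
proof -
  have "(\<Sum>e\<in>E0. wt G e * cross (\<lambda>e. fst (ends G e)) (\<lambda>e. snd (ends G e)) S e) =
        (\<Sum>e\<in>E0. if e \<in> crossE G S then wt G e else 0)"
    using assms(2) by (intro sum.cong) (auto simp: cross_def crossE_def)
  also have "\<dots> = (\<Sum>e\<in>E0 \<inter> crossE G S. wt G e)" using assms by (simp add: sum.inter_restrict)
  also have "E0 \<inter> crossE G S = crossE G S" using assms by auto
  finally show ?thesis by simp
qed

lemma epow_ennreal: "r \<noteq> 0 \<Longrightarrow> M \<ge> 0 \<Longrightarrow> epow (ennreal M) r = ennreal (M powr r)"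
  by (simp add: epow_def)

lemma admissible_OmS:
  assumes G: "is_graph G" and S: "S \<subseteq> verts G" "S \<inter> bdry G = {}"
    and cr: "finite (crossE G S)"
  shows "admissible G (OmS G S)"
  unfolding admissible_def
  using gopen_OmS[OF G S(1)] gfrontier_OmS[OF G S(1)] cr S(2)
  by (auto simp: Fmid_def OmS_def)

lemma iso_le:
  assumes G: "is_graph G" and S: "S \<subseteq> verts G" "finite S" "S \<noteq> {}" "S \<inter> bdry G = {}"
    and E0: "crossE G S \<subseteq> E0" "E0 \<subseteq> edges G" "finite E0" and nu: "\<nu> > 1"
  shows "Iso G \<nu> \<le> ennreal ((\<Sum>e\<in>E0. wt G e * cross (\<lambda>e. fst (ends G e)) (\<lambda>e. snd (ends G e)) S e)
                            / (\<Sum>v\<in>S. vmeas G v) powr (1 - 1/\<nu>))"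
proof -
  have crf: "finite (crossE G S)" using E0 finite_subset by blast
  have adm: "admissible G (OmS G S)" by (rule admissible_OmS[OF G S(1) S(4) crf])
  have ne: "OmS G S \<noteq> {}" using S(3) by (auto simp: OmS_def)
  have M: "(\<Sum>v\<in>S. vmeas G v) > 0"
    using G S by (intro sum_pos) (auto simp: is_graph_def)
  have A0: "0 \<le> (\<Sum>e\<in>E0. wt G e * cross (\<lambda>e. fst (ends G e)) (\<lambda>e. snd (ends G e)) S e)"
    using G E0 by (intro sum_nonneg mult_nonneg_nonneg) (auto simp: is_graph_def cross_def less_imp_le)
  have "Iso G \<nu> \<le> area G (OmS G S) / epow (vol G (OmS G S)) (1 - 1 / \<nu>)"
    unfolding Iso_def by (rule INF_lower) (use adm ne in auto)
  also have "\<dots> = ennreal (\<Sum>e\<in>crossE G S. wt G e) / ennreal ((\<Sum>v\<in>S. vmeas G v) powr (1 - 1/\<nu>))"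
    using nu M by (simp add: area_OmS[OF G S(1)] vol_OmS[OF G S(1,2)] epow_ennreal)
  also have "\<dots> = ennreal ((\<Sum>e\<in>E0. wt G e * cross (\<lambda>e. fst (ends G e)) (\<lambda>e. snd (ends G e)) S e)
                            / (\<Sum>v\<in>S. vmeas G v) powr (1 - 1/\<nu>))"
    using M A0 by (simp add: cross_sum[OF E0] divide_ennreal)
  finally show ?thesis .
qed

lemma iso_tilde_le:
  assumes G: "is_graph G" and cl: "closed_graph G"
    and S: "S \<subseteq> verts G" "S \<noteq> {}"
    and half: "ennreal (\<Sum>v\<in>S. vmeas G v) \<le> vol G (pts G) / 2"
    and E0: "crossE G S \<subseteq> E0" "E0 \<subseteq> edges G" "finite E0" and nu: "\<nu> > 1"
  shows "Iso_tilde G \<nu> \<le> ennreal ((\<Sum>e\<in>E0. wt G e * cross (\<lambda>e. fst (ends G e)) (\<lambda>e. snd (ends G e)) S e)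
                            / (\<Sum>v\<in>S. vmeas G v) powr (1 - 1/\<nu>))"
proof -
  have finV: "finite (verts G)" and bd: "bdry G = {}" using cl by (auto simp: closed_graph_def)
  have finS: "finite S" using S finV finite_subset by blast
  have crf: "finite (crossE G S)" using E0 finite_subset by blast
  have adm: "admissible G (OmS G S)" by (rule admissible_OmS[OF G S(1) _ crf]) (use bd in auto)
  have ne: "OmS G S \<noteq> {}" using S(2) by (auto simp: OmS_def)
  define M where "M = (\<Sum>v\<in>S. vmeas G v)"
  define Mt where "Mt = (\<Sum>v\<in>verts G. vmeas G v)"
  have M: "M > 0" unfolding M_def
    using G S finS by (intro sum_pos) (auto simp: is_graph_def)
  have volpts: "vol G (pts G) = ennreal Mt"
  proof -
    have "{v \<in> verts G. Vx v \<in> pts G} = verts G" by auto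
    then have "vol G (pts G) = (\<Sum>v\<in>verts G. ennreal (vmeas G v))" using finV by (simp add: vol_def)
    also have "\<dots> = ennreal Mt" unfolding Mt_def
      using G by (intro sum_ennreal) (auto simp: is_graph_def less_imp_le)
    finally show ?thesis .
  qed
  have Mt: "Mt = M + (\<Sum>v\<in>verts G - S. vmeas G v)"
    unfolding Mt_def M_def using sum.subset_diff[OF S(1) finV, of "vmeas G"] by simp
  have volc: "vol G (pts G - OmS G S) = ennreal (\<Sum>v\<in>verts G - S. vmeas G v)"
  proof -
    have "{v \<in> verts G. Vx v \<in> pts G - OmS G S} = verts G - S" by auto
    then have "vol G (pts G - OmS G S) = (\<Sum>v\<in>verts G - S. ennreal (vmeas G v))" using finV by (simp add: vol_def)
    also have "\<dots> = ennreal (\<Sum>v\<in>verts G - S. vmeas G v)"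
      using G by (intro sum_ennreal) (auto simp: is_graph_def less_imp_le)
    finally show ?thesis .
  qed
  have Mt0: "Mt \<ge> 0" unfolding Mt_def using G by (intro sum_nonneg) (auto simp: is_graph_def less_imp_le)
  have "ennreal Mt / 2 = ennreal (Mt / 2)" by (rule ennreal_divide_numeral[OF Mt0])
  then have "ennreal M \<le> ennreal (Mt / 2)"
    using half volpts by (simp add: M_def)
  then have MMt: "M \<le> Mt / 2"
    using M by (simp add: ennreal_le_iff2)
  have Mle: "M \<le> (\<Sum>v\<in>verts G - S. vmeas G v)" using MMt Mt by simp
  have notall: "OmS G S \<noteq> pts G"
  proof
    assume eq: "OmS G S = pts G"
    have "verts G \<subseteq> S"
    proof
      fix v assume "v \<in> verts G"
      then have "Vx v \<in> OmS G S" using eq by simp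
      then show "v \<in> S" by simp
    qed
    then have "verts G - S = {}" by auto
    then show False using Mle M by (metis less_le_not_le sum.empty)
  qed
  have mineq: "min (vol G (OmS G S)) (vol G (pts G - OmS G S)) = ennreal M"
    using ennreal_leI[OF Mle] by (simp add: vol_OmS[OF G S(1) finS] volc M_def[symmetric] min_absorb1)
  have A0: "0 \<le> (\<Sum>e\<in>E0. wt G e * cross (\<lambda>e. fst (ends G e)) (\<lambda>e. snd (ends G e)) S e)"
    using G E0 by (intro sum_nonneg mult_nonneg_nonneg) (auto simp: is_graph_def cross_def less_imp_le)
  have "Iso_tilde G \<nu> \<le> area G (OmS G S) / epow (min (vol G (OmS G S)) (vol G (pts G - OmS G S))) (1 - 1 / \<nu>)"
    unfolding Iso_tilde_def by (rule INF_lower) (use adm ne notall in auto)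
  also have "\<dots> = ennreal (\<Sum>e\<in>crossE G S. wt G e) / ennreal (M powr (1 - 1/\<nu>))"
    using nu M by (simp add: area_OmS[OF G S(1)] mineq epow_ennreal)
  also have "\<dots> = ennreal ((\<Sum>e\<in>E0. wt G e * cross (\<lambda>e. fst (ends G e)) (\<lambda>e. snd (ends G e)) S e)
                            / (\<Sum>v\<in>S. vmeas G v) powr (1 - 1/\<nu>))"
    using M A0 by (simp add: cross_sum[OF E0] divide_ennreal M_def)
  finally show ?thesis .
qed

lemma rho_bound:
  assumes G: "is_graph G" and v: "v \<in> verts G" and E0: "finite E0" "E0 \<subseteq> edges G"
    and rho: "rho_sup G < top"
  shows "(\<Sum>e\<in>{e\<in>E0. fst (ends G e) \<noteq> snd (ends G e) \<and> (fst (ends G e) = v \<or> snd (ends G e) = v)}.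
            wt G e * len G e / 2) \<le> enn2real (rho_sup G) * vmeas G v"
proof -
  define A where "A = {e\<in>E0. fst (ends G e) \<noteq> snd (ends G e) \<and> (fst (ends G e) = v \<or> snd (ends G e) = v)}"
  define B where "B = {e \<in> edges G. v = fst (ends G e) \<or> v = snd (ends G e)}"
  define f where "f = (\<lambda>e. ennreal (wt G e * len G e / 2))"
  have AB: "A \<subseteq> B" using E0 by (auto simp: A_def B_def)
  have finA: "finite A" using E0 by (simp add: A_def)
  have m: "vmeas G v > 0" using G v by (auto simp: is_graph_def)
  have nn: "\<And>e. e \<in> A \<Longrightarrow> 0 \<le> wt G e * len G e / 2"
    using G AB by (auto simp: is_graph_def B_def less_imp_le)
  have "ennreal (\<Sum>e\<in>A. wt G e * len G e / 2) = (\<Sum>e\<in>A. f e)"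
    using nn by (simp add: f_def sum_ennreal)
  also have "\<dots> = infsum f A" using finA by simp
  also have "\<dots> \<le> infsum f B"
    by (rule infsum_mono_neutral) (use AB in \<open>auto simp: f_def intro: nonneg_summable_on_complete\<close>)
  finally have le1: "ennreal (\<Sum>e\<in>A. wt G e * len G e / 2) \<le> infsum f B" .
  have "infsum f B / ennreal (vmeas G v) \<le> rho_sup G"
    unfolding rho_sup_def B_def f_def by (rule SUP_upper2[OF v]) (simp add: eq_commute)
  moreover have "ennreal (\<Sum>e\<in>A. wt G e * len G e / 2) / ennreal (vmeas G v) \<le> infsum f B / ennreal (vmeas G v)"
    by (rule divide_right_mono_ennreal[OF le1])
  ultimately have "ennreal ((\<Sum>e\<in>A. wt G e * len G e / 2) / vmeas G v) \<le> ennreal (enn2real (rho_sup G))"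
    using m nn rho by (simp add: divide_ennreal sum_nonneg ennreal_enn2real less_top)
  then have "(\<Sum>e\<in>A. wt G e * len G e / 2) / vmeas G v \<le> enn2real (rho_sup G)"
    by (simp add: ennreal_le_iff2) (use enn2real_nonneg[of "rho_sup G"] in linarith)
  then show ?thesis using m by (simp add: A_def divide_le_eq)
qed

lemma disc_unified:
  fixes m x :: "'v \<Rightarrow> real" and w L :: "'e \<Rightarrow> real" and ea eb :: "'e \<Rightarrow> 'v"
    and p \<nu> K R :: real
  assumes finV: "finite V0" and finE: "finite E0"
    and m: "\<And>v. v \<in> V0 \<Longrightarrow> m v \<ge> 0"
    and w: "\<And>e. e \<in> E0 \<Longrightarrow> w e \<ge> 0" and L: "\<And>e. e \<in> E0 \<Longrightarrow> L e > 0"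
    and K: "K > 0" and p: "p \<ge> 1" "p < \<nu>"
    and iso: "\<And>S. S \<subseteq> V0 \<Longrightarrow> S \<noteq> {} \<Longrightarrow>
                K * (\<Sum>v\<in>S. m v) powr (1 - 1/\<nu>) \<le> (\<Sum>e\<in>E0. w e * cross ea eb S e)"
    and xsupp: "\<forall>v. x v \<noteq> 0 \<longrightarrow> v \<in> V0"
    and R: "p > 1 \<Longrightarrow> R \<ge> 0 \<and> (\<forall>v \<in> V0.
       (\<Sum>e\<in>{e\<in>E0. ea e \<noteq> eb e \<and> (ea e = v \<or> eb e = v)}. w e * L e / 2) \<le> R * m v)"
  shows "K * (\<Sum>v\<in>V0. m v * \<bar>x v\<bar> powr (p * \<nu> / (\<nu> - p))) powr (1 / (p * \<nu> / (\<nu> - p)))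
     \<le> (p * (\<nu> - 1) / (\<nu> - p)) * (if p = 1 then 1 else R powr ((p - 1) / p)) *
        (\<Sum>e\<in>E0. w e * (L e powr (1 - p) * \<bar>x (eb e) - x (ea e)\<bar> powr p)) powr (1 / p)"
proof (cases "p = 1")
  case False
  then have p1: "p > 1" using p by simp
  show ?thesis
    using disc_sob_p[OF finV finE m w L K p1 p(2) iso xsupp] R[OF p1] False by auto
next
  case True
  have nu1: "\<nu> > 1" using p True by simp
  define r where "r = \<nu> / (\<nu> - 1)"
  have r1: "r > 1" using nu1 by (simp add: r_def)
  have rnu: "1/r + 1/\<nu> = 1" using nu1 by (simp add: r_def field_simps)
  have rinv: "1/r = 1 - 1/\<nu>" using nu1 by (simp add: r_def field_simps)
  define y where "y = (\<lambda>v. \<bar>x v\<bar>)"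
  have y0: "\<forall>v. y v \<ge> 0" by (simp add: y_def)
  have ysupp: "\<forall>v. y v > 0 \<longrightarrow> v \<in> V0" using xsupp by (auto simp: y_def)
  have "K * (\<Sum>v\<in>V0. m v * y v powr r) powr (1/r) \<le> (\<Sum>e\<in>E0. w e * \<bar>y (eb e) - y (ea e)\<bar>)"
    by (rule disc_sob1[OF finV finE m w K r1 nu1 rnu _ y0 ysupp]) (use iso rinv in auto)
  also have "\<dots> \<le> (\<Sum>e\<in>E0. w e * \<bar>x (eb e) - x (ea e)\<bar>)"
    using w by (intro sum_mono mult_left_mono) (auto simp: y_def abs_triangle_ineq3)
  also have "\<dots> = (\<Sum>e\<in>E0. w e * (L e powr (1 - p) * \<bar>x (eb e) - x (ea e)\<bar> powr p)) powr (1 / p)"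
  proof -
    have "(\<Sum>e\<in>E0. w e * \<bar>x (eb e) - x (ea e)\<bar>) = (\<Sum>e\<in>E0. w e * (L e powr (1 - p) * \<bar>x (eb e) - x (ea e)\<bar> powr p))"
    proof (rule sum.cong[OF refl])
      fix e assume "e \<in> E0"
      then have "L e > 0" by (rule L)
      then show "w e * \<bar>x (eb e) - x (ea e)\<bar> = w e * (L e powr (1 - p) * \<bar>x (eb e) - x (ea e)\<bar> powr p)"
        using True by simp
    qed
    moreover have "0 \<le> (\<Sum>e\<in>E0. w e * \<bar>x (eb e) - x (ea e)\<bar>)" using w by (auto intro!: sum_nonneg)
    ultimately show ?thesis using True by simp
  qed
  finally show ?thesis
    using True nu1 by (simp add: y_def r_def)
qed

lemma subadd_powr:
  fixes a b \<theta> :: real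
  assumes "a \<ge> 0" "b \<ge> 0" "0 < \<theta>" "\<theta> \<le> 1"
  shows "(a + b) powr \<theta> \<le> a powr \<theta> + b powr \<theta>"
proof (cases "a + b = 0")
  case True then show ?thesis using assms by simp
next
  case False
  then have s: "a + b > 0" using assms by simp
  have k: "c * (a + b) powr (\<theta> - 1) \<le> c powr \<theta>" if c: "c \<ge> 0" "c \<le> a + b" for c
  proof (cases "c = 0")
    case True then show ?thesis by simp
  next
    case False
    then have cp: "c > 0" using c by simp
    have "(a + b) powr (\<theta> - 1) \<le> c powr (\<theta> - 1)"
      using cp c assms by (intro powr_mono2') auto
    then have "c * (a + b) powr (\<theta> - 1) \<le> c * c powr (\<theta> - 1)" using cp by simp
    also have "\<dots> = c powr \<theta>" using cp by (simp add: powr_diff)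
    finally show ?thesis .
  qed
  have e: "(a + b) * (a + b) powr (\<theta> - 1) = (a + b) powr \<theta>" using s by (simp add: powr_diff)
  have "(a + b) powr \<theta> = a * (a + b) powr (\<theta> - 1) + b * (a + b) powr (\<theta> - 1)"
    by (simp add: e[symmetric] algebra_simps)
  also have "\<dots> \<le> a powr \<theta> + b powr \<theta>"
    using k[of a] k[of b] assms by (intro add_mono) auto
  finally show ?thesis .
qed

lemma combine_split:
  fixes K C p q Np Nm Dp Dm D :: real
  assumes "K \<ge> 0" "C \<ge> 0" "p \<ge> 1" "q \<ge> p" "Np \<ge> 0" "Nm \<ge> 0" "Dp \<ge> 0" "Dm \<ge> 0"
    and hp: "K * Np \<le> C * Dp powr (1/p)" and hm: "K * Nm \<le> C * Dm powr (1/p)"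
    and D: "Dp + Dm \<le> D"
  shows "K * (Np powr q + Nm powr q) powr (1/q) \<le> C * D powr (1/p)"
proof -
  have p0: "p > 0" using assms by simp
  have q0: "q > 0" using assms by simp
  have "(K * Np) powr p \<le> (C * Dp powr (1/p)) powr p"
    using hp assms by (intro powr_mono2) auto
  then have a: "K powr p * Np powr p \<le> C powr p * Dp"
    using assms p0 by (simp add: powr_mult powr_powr)
  have "(K * Nm) powr p \<le> (C * Dm powr (1/p)) powr p"
    using hm assms by (intro powr_mono2) auto
  then have b: "K powr p * Nm powr p \<le> C powr p * Dm"
    using assms p0 by (simp add: powr_mult powr_powr)
  have "(Np powr q + Nm powr q) powr (p/q) \<le> (Np powr q) powr (p/q) + (Nm powr q) powr (p/q)"
    by (rule subadd_powr) (use assms q0 in auto)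
  also have "\<dots> = Np powr p + Nm powr p" using q0 by (simp add: powr_powr)
  finally have c: "(Np powr q + Nm powr q) powr (p/q) \<le> Np powr p + Nm powr p" .
  have "(K * (Np powr q + Nm powr q) powr (1/q)) powr p = K powr p * (Np powr q + Nm powr q) powr (p/q)"
    using assms by (simp add: powr_mult powr_powr)
  also have "\<dots> \<le> K powr p * (Np powr p + Nm powr p)"
    using c by (intro mult_left_mono) auto
  also have "\<dots> \<le> C powr p * (Dp + Dm)" using a b by (simp add: algebra_simps)
  also have "\<dots> \<le> C powr p * D" using D by (intro mult_left_mono) auto
  finally have e: "(K * (Np powr q + Nm powr q) powr (1/q)) powr p \<le> C powr p * D" .
  have "K * (Np powr q + Nm powr q) powr (1/q) = ((K * (Np powr q + Nm powr q) powr (1/q)) powr p) powr (1/p)"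
    using assms p0 by (simp add: powr_powr)
  also have "\<dots> \<le> (C powr p * D) powr (1/p)"
    using e assms by (intro powr_mono2) auto
  also have "\<dots> = C * D powr (1/p)"
    using assms p0 D by (simp add: powr_mult powr_powr)
  finally show ?thesis .
qed

lemma superadd_pow:
  fixes a b p :: real
  assumes "a \<ge> 0" "b \<ge> 0" "p \<ge> 1"
  shows "a powr p + b powr p \<le> (a + b) powr p"
proof -
  have "(a powr p + b powr p) powr (1/p) \<le> (a powr p) powr (1/p) + (b powr p) powr (1/p)"
    by (rule subadd_powr) (use assms in auto)
  also have "\<dots> = a + b" using assms by (simp add: powr_powr)
  finally have "((a powr p + b powr p) powr (1/p)) powr p \<le> (a + b) powr p"
    using assms by (intro powr_mono2) auto
  then show ?thesis using assms by (simp add: powr_powr)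
qed

definition xval :: "('v,'e) mgraph \<Rightarrow> (('v,'e) gpoint \<Rightarrow> real) \<Rightarrow> 'v \<Rightarrow> real" where
  "xval G \<phi> v = (if v \<in> verts G then \<phi> (Vx v) else 0)"

lemma edge_vals:
  assumes G: "is_graph G" and e: "e \<in> edges G"
  shows "edge_fun G \<phi> e 0 = xval G \<phi> (fst (ends G e))"
    "edge_fun G \<phi> e (len G e) = xval G \<phi> (snd (ends G e))"
  using G e by (auto simp: edge_fun_def param_def xval_def is_graph_def)

lemma edge_zero:
  assumes G: "is_graph G" and C: "C1_Dir G \<phi>" and e: "e \<in> edges G" "e \<notin> esupp G \<phi>"
  shows "xval G \<phi> (fst (ends G e)) = 0" "xval G \<phi> (snd (ends G e)) = 0"
proof -
  have L: "len G e > 0" using G e by (auto simp: is_graph_def)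
  have cont: "continuous_on {0..len G e} (edge_fun G \<phi> e)" using C e by (auto simp: C1_Dir_def)
  have cl: "closure {0<..<len G e} = {0..len G e}" using L by simp
  have z: "edge_fun G \<phi> e t = 0" if "t \<in> {0<..<len G e}" for t
    using that e by (auto simp: edge_fun_def param_def esupp_def)
  have "edge_fun G \<phi> e 0 = 0"
    by (rule continuous_constant_on_closure[of "{0<..<len G e}"]) (use cont cl z L in auto)
  then show "xval G \<phi> (fst (ends G e)) = 0" using edge_vals[OF G e(1)] by simp
  have "edge_fun G \<phi> e (len G e) = 0"
    by (rule continuous_constant_on_closure[of "{0<..<len G e}"]) (use cont cl z L in auto)
  then show "xval G \<phi> (snd (ends G e)) = 0" using edge_vals[OF G e(1)] by simp
qed

lemma xval_supp: "xval G \<phi> v \<noteq> 0 \<Longrightarrow> v \<in> vsupp G \<phi>"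
  by (auto simp: xval_def vsupp_def split: if_splits)

lemma crossE_sub:
  assumes G: "is_graph G" and C: "C1_Dir G \<phi>" and S: "S \<subseteq> vsupp G \<phi>"
  shows "crossE G S \<subseteq> esupp G \<phi>"
proof
  fix e assume e: "e \<in> crossE G S"
  then have eE: "e \<in> edges G" and "fst (ends G e) \<in> S \<or> snd (ends G e) \<in> S" by (auto simp: crossE_def)
  then have "xval G \<phi> (fst (ends G e)) \<noteq> 0 \<or> xval G \<phi> (snd (ends G e)) \<noteq> 0"
    using S by (auto simp: vsupp_def xval_def)
  then show "e \<in> esupp G \<phi>" using edge_zero[OF G C eE] by blast
qed

lemma basic_facts:
  assumes G: "is_graph G" and C: "C1_Dir G \<phi>"
  shows "finite (vsupp G \<phi>)" "finite (esupp G \<phi>)" "esupp G \<phi> \<subseteq> edges G" "vsupp G \<phi> \<subseteq> verts G"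
    "vsupp G \<phi> \<inter> bdry G = {}"
  using C by (auto simp: C1_Dir_def vsupp_def esupp_def)

lemma grad_ge:
  assumes G: "is_graph G" and C: "C1_Dir G \<phi>" and p: "p \<ge> 1"
  shows "(\<Sum>e\<in>esupp G \<phi>. wt G e * (len G e powr (1 - p) *
            \<bar>xval G \<phi> (snd (ends G e)) - xval G \<phi> (fst (ends G e))\<bar> powr p)) powr (1/p)
         \<le> grad_norm G p \<phi>"
  unfolding grad_norm_def
proof (rule powr_mono2)
  show "0 \<le> 1/p" using p by simp
  show "0 \<le> (\<Sum>e\<in>esupp G \<phi>. wt G e * (len G e powr (1 - p) *
            \<bar>xval G \<phi> (snd (ends G e)) - xval G \<phi> (fst (ends G e))\<bar> powr p))"
    using G by (intro sum_nonneg mult_nonneg_nonneg) (auto simp: is_graph_def esupp_def less_imp_le)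
  show "(\<Sum>e\<in>esupp G \<phi>. wt G e * (len G e powr (1 - p) *
            \<bar>xval G \<phi> (snd (ends G e)) - xval G \<phi> (fst (ends G e))\<bar> powr p))
      \<le> (\<Sum>e\<in>esupp G \<phi>. wt G e * integral {0..len G e} (\<lambda>t. \<bar>deriv (edge_fun G \<phi> e) t\<bar> powr p))"
  proof (rule sum_mono)
    fix e assume "e \<in> esupp G \<phi>"
    then have e: "e \<in> edges G" by (simp add: esupp_def)
    have L: "len G e > 0" "wt G e > 0" using G e by (auto simp: is_graph_def)
    obtain f' where f': "\<forall>t\<in>{0<..<len G e}. (edge_fun G \<phi> e has_real_derivative f' t) (at t)"
      "uniformly_continuous_on {0<..<len G e} f'"
      using C e unfolding C1_Dir_def by blast
    have "len G e powr (1 - p) * \<bar>edge_fun G \<phi> e (len G e) - edge_fun G \<phi> e 0\<bar> powr p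
        \<le> integral {0..len G e} (\<lambda>t. \<bar>deriv (edge_fun G \<phi> e) t\<bar> powr p)"
      by (rule edge_grad_bound[OF L(1) p _ _ f'(2)]) (use C e f'(1) in \<open>auto simp: C1_Dir_def\<close>)
    then show "wt G e * (len G e powr (1 - p) *
            \<bar>xval G \<phi> (snd (ends G e)) - xval G \<phi> (fst (ends G e))\<bar> powr p)
        \<le> wt G e * integral {0..len G e} (\<lambda>t. \<bar>deriv (edge_fun G \<phi> e) t\<bar> powr p)"
      using L by (simp add: edge_vals[OF G e])
  qed
qed

lemma vnorm_eq:
  "vnorm G q \<phi> = (\<Sum>v\<in>vsupp G \<phi>. vmeas G v * \<bar>xval G \<phi> v\<bar> powr q) powr (1/q)"
  unfolding vnorm_def by (intro arg_cong2[where f="(powr)"] sum.cong) (auto simp: vsupp_def xval_def)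

lemma iso_real:
  assumes "ennreal K \<le> ennreal (A / B)" "B > 0" "A \<ge> 0"
  shows "K * B \<le> A"
proof -
  have "K \<le> A / B" using assms by (simp add: ennreal_le_iff divide_nonneg_pos)
  then show ?thesis using assms by (simp add: pos_le_divide_eq)
qed

lemma disc_part1:
  assumes G: "is_graph G" and C: "C1_Dir G \<phi>" and p: "1 \<le> p" "p < \<nu>"
    and IK: "Iso G \<nu> = ennreal K" "K > 0" and rho: "p > 1 \<Longrightarrow> rho_sup G < top"
  shows "K * vnorm G (p * \<nu> / (\<nu> - p)) \<phi> \<le> (p * (\<nu> - 1) / (\<nu> - p)) *
           (if p = 1 then 1 else enn2real (rho_sup G) powr ((p - 1) / p)) * grad_norm G p \<phi>"
proof -
  note bf = basic_facts[OF G C]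
  have nu1: "\<nu> > 1" using p by simp
  have iso: "K * (\<Sum>v\<in>S. vmeas G v) powr (1 - 1/\<nu>) \<le>
      (\<Sum>e\<in>esupp G \<phi>. wt G e * cross (\<lambda>e. fst (ends G e)) (\<lambda>e. snd (ends G e)) S e)"
    if S: "S \<subseteq> vsupp G \<phi>" "S \<noteq> {}" for S
  proof (rule iso_real)
    have fS: "finite S" using S bf finite_subset by blast
    show "ennreal K \<le> ennreal ((\<Sum>e\<in>esupp G \<phi>. wt G e * cross (\<lambda>e. fst (ends G e)) (\<lambda>e. snd (ends G e)) S e)
          / (\<Sum>v\<in>S. vmeas G v) powr (1 - 1/\<nu>))"
      unfolding IK(1)[symmetric]
      by (rule iso_le[OF G _ fS S(2) _ crossE_sub[OF G C S(1)] bf(3) bf(2) nu1]) (use S bf in auto)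
    have "(\<Sum>v\<in>S. vmeas G v) > 0" using G S bf fS by (intro sum_pos) (auto simp: is_graph_def)
    then show "(\<Sum>v\<in>S. vmeas G v) powr (1 - 1/\<nu>) > 0" by simp
    show "0 \<le> (\<Sum>e\<in>esupp G \<phi>. wt G e * cross (\<lambda>e. fst (ends G e)) (\<lambda>e. snd (ends G e)) S e)"
      using G bf by (intro sum_nonneg mult_nonneg_nonneg) (auto simp: is_graph_def cross_def less_imp_le)
  qed
  have R: "enn2real (rho_sup G) \<ge> 0 \<and> (\<forall>v \<in> vsupp G \<phi>.
       (\<Sum>e\<in>{e\<in>esupp G \<phi>. fst (ends G e) \<noteq> snd (ends G e) \<and> (fst (ends G e) = v \<or> snd (ends G e) = v)}.
          wt G e * len G e / 2) \<le> enn2real (rho_sup G) * vmeas G v)" if "p > 1"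
    using rho_bound[OF G _ bf(2) bf(3) rho[OF that]] bf(4) by auto
  have "K * vnorm G (p * \<nu> / (\<nu> - p)) \<phi> \<le> (p * (\<nu> - 1) / (\<nu> - p)) *
           (if p = 1 then 1 else enn2real (rho_sup G) powr ((p - 1) / p)) *
           (\<Sum>e\<in>esupp G \<phi>. wt G e * (len G e powr (1 - p) *
            \<bar>xval G \<phi> (snd (ends G e)) - xval G \<phi> (fst (ends G e))\<bar> powr p)) powr (1/p)"
    unfolding vnorm_eq
    by (rule disc_unified[OF bf(1) bf(2) _ _ _ IK(2) p iso, where x = "xval G \<phi>" and R = "enn2real (rho_sup G)"])
       (use G bf R in \<open>auto simp: is_graph_def less_imp_le subset_iff intro: xval_supp\<close>)
  also have "\<dots> \<le> (p * (\<nu> - 1) / (\<nu> - p)) *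
           (if p = 1 then 1 else enn2real (rho_sup G) powr ((p - 1) / p)) * grad_norm G p \<phi>"
    by (rule mult_left_mono[OF grad_ge[OF G C p(1)]]) (use p in auto)
  finally show ?thesis .
qed

lemma final_conv:
  fixes I :: ennreal and N gn p \<nu> :: real
  assumes p: "1 \<le> p" "p < \<nu>" and N0: "N \<ge> 0" and gn0: "gn \<ge> 0"
    and H1: "N > 0 \<Longrightarrow> I < top"
    and H2: "\<And>K. I = ennreal K \<Longrightarrow> K > 0 \<Longrightarrow> N > 0 \<Longrightarrow> (p > 1 \<Longrightarrow> rho_sup G < top) \<Longrightarrow>
       K * N \<le> (p * (\<nu> - 1) / (\<nu> - p)) *
           (if p = 1 then 1 else enn2real (rho_sup G) powr ((p - 1) / p)) * gn"
  shows "sob_const I G \<nu> p * ennreal N \<le> ennreal gn"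
proof (cases "N = 0")
  case True then show ?thesis by simp
next
  case False
  then have Np: "N > 0" using N0 by simp
  define K where "K = enn2real I"
  have IK: "I = ennreal K" using H1[OF Np] by (simp add: K_def ennreal_enn2real less_top)
  have K0: "K \<ge> 0" by (simp add: K_def)
  show ?thesis
  proof (cases "K = 0")
    case True then show ?thesis by (simp add: IK sob_const_def)
  next
    case False
    then have Kp: "K > 0" using K0 by simp
    have nu1: "\<nu> > 1" using p by simp
    show ?thesis
    proof (cases "p = 1")
      case True
      have "K * N \<le> gn" using H2[OF IK Kp Np] True nu1 by simp
      moreover have "(\<nu> - p) / (p * (\<nu> - 1)) = 1" using True nu1 by simp
      ultimately show ?thesis using True Kp Np
        by (simp add: sob_const_def IK epow_def ennreal_mult[symmetric] ennreal_leI)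
    next
      case False
      then have p1: "p > 1" using p by simp
      have b0: "(p - 1) / p \<noteq> 0" using p1 by simp
      show ?thesis
      proof (cases "rho_sup G = top")
        case True
        then show ?thesis using b0 by (simp add: sob_const_def epow_def)
      next
        case False
        then have rt: "rho_sup G < top" by (simp add: less_top)
        define R where "R = enn2real (rho_sup G)"
        have rR: "rho_sup G = ennreal R" using rt by (simp add: R_def ennreal_enn2real)
        have R0: "R \<ge> 0" by (simp add: R_def)
        have H: "K * N \<le> (p * (\<nu> - 1) / (\<nu> - p)) * R powr ((p - 1) / p) * gn"
          using H2[OF IK Kp Np rt] p1 by (simp add: R_def)
        have Rp: "R > 0"
        proof (rule ccontr)
          assume "\<not> R > 0"
          then have "R = 0" using R0 by simp
          then have "K * N \<le> 0" using H by simp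
          moreover have "K * N > 0" using Kp Np by simp
          ultimately show False by simp
        qed
        define c where "c = (\<nu> - p) / (p * (\<nu> - 1))"
        have cp: "c > 0" using p1 p by (simp add: c_def)
        have ep: "epow (rho_sup G) ((p - 1) / p) = ennreal (R powr ((p - 1) / p))"
          using b0 R0 by (simp add: rR epow_def)
        define i where "i = inverse (R powr ((p - 1) / p))"
        have i0: "i > 0" using Rp by (simp add: i_def)
        have sc: "sob_const I G \<nu> p = ennreal K * ennreal i * ennreal c"
          using Rp by (simp add: sob_const_def IK ep inverse_ennreal c_def i_def)
        have "sob_const I G \<nu> p * ennreal N = ennreal (K * inverse (R powr ((p - 1) / p)) * c * N)"
          unfolding sc i_def[symmetric]
          using Kp i0 cp Np by (simp add: ennreal_mult[symmetric])
        also have "\<dots> \<le> ennreal gn"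
        proof (rule ennreal_leI)
          have "K * inverse (R powr ((p - 1) / p)) * c * N = (K * N) * (c / R powr ((p - 1) / p))"
            by (simp add: field_simps)
          also have "\<dots> \<le> ((p * (\<nu> - 1) / (\<nu> - p)) * R powr ((p - 1) / p) * gn) * (c / R powr ((p - 1) / p))"
            using H cp Rp by (intro mult_right_mono) auto
          also have "\<dots> = gn"
          proof -
            have gc: "(p * (\<nu> - 1) / (\<nu> - p)) * c = 1"
              using p1 p by (simp add: c_def divide_simps)
            have X: "R powr ((p - 1) / p) > 0" using Rp by simp
            have "((p * (\<nu> - 1) / (\<nu> - p)) * R powr ((p - 1) / p) * gn) * (c / R powr ((p - 1) / p))
                = ((p * (\<nu> - 1) / (\<nu> - p)) * c) * (R powr ((p - 1) / p) / R powr ((p - 1) / p)) * gn"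
              by (simp add: algebra_simps)
            also have "\<dots> = gn" using X by (simp only: gc) simp
            finally show ?thesis .
          qed
          finally show "K * inverse (R powr ((p - 1) / p)) * c * N \<le> gn" .
        qed
        finally show ?thesis .
      qed
    qed
  qed
qed

lemma half_vol:
  assumes G: "is_graph G" and fS: "finite S" and S: "S \<subseteq> {v\<in>verts G. P (\<phi> (Vx v))}"
    and h: "vol G {x\<in>pts G. P (\<phi> x)} \<le> vol G (pts G) / 2"
  shows "ennreal (\<Sum>v\<in>S. vmeas G v) \<le> vol G (pts G) / 2"
proof -
  have "ennreal (\<Sum>v\<in>S. vmeas G v) = (\<Sum>v\<in>S. ennreal (vmeas G v))"
    using G S by (subst sum_ennreal) (auto simp: is_graph_def less_imp_le)
  also have "\<dots> = infsum (\<lambda>v. ennreal (vmeas G v)) S" using fS by simp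
  also have "\<dots> \<le> infsum (\<lambda>v. ennreal (vmeas G v)) {v \<in> verts G. Vx v \<in> {x\<in>pts G. P (\<phi> x)}}"
    by (rule infsum_mono_neutral) (use S in \<open>auto intro: nonneg_summable_on_complete\<close>)
  also have "\<dots> = vol G {x\<in>pts G. P (\<phi> x)}" by (simp add: vol_def)
  finally show ?thesis using h by simp
qed

lemma delta_split:
  fixes a b :: real
  shows "\<bar>max b 0 - max a 0\<bar> + \<bar>max (- b) 0 - max (- a) 0\<bar> = \<bar>b - a\<bar>"
  by (auto simp: max_def abs_if)

lemma disc_part2:
  assumes G: "is_graph G" and C: "C1_Dir G \<phi>" and p: "1 \<le> p" "p < \<nu>"
    and cl: "closed_graph G" and sp: "split_fun G \<phi>"
    and IK: "Iso_tilde G \<nu> = ennreal K" "K > 0" and rho: "p > 1 \<Longrightarrow> rho_sup G < top"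
  shows "K * vnorm G (p * \<nu> / (\<nu> - p)) \<phi> \<le> (p * (\<nu> - 1) / (\<nu> - p)) *
           (if p = 1 then 1 else enn2real (rho_sup G) powr ((p - 1) / p)) * grad_norm G p \<phi>"
proof -
  note bf = basic_facts[OF G C]
  have nu1: "\<nu> > 1" using p by simp
  define q where "q = p * \<nu> / (\<nu> - p)"
  define Cst where "Cst = (p * (\<nu> - 1) / (\<nu> - p)) * (if p = 1 then 1 else enn2real (rho_sup G) powr ((p - 1) / p))"
  have Cst0: "Cst \<ge> 0" using p by (simp add: Cst_def)
  have qp: "q \<ge> p"
  proof -
    have "p * (\<nu> - p) \<le> p * \<nu>" using p by (intro mult_left_mono) auto
    then show ?thesis using p by (simp add: q_def le_divide_eq)
  qed
  have q0: "q > 0" using qp p by simp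
  define x where "x = xval G \<phi>"
  define D' where "D' = (\<lambda>y :: 'a \<Rightarrow> real. (\<Sum>e\<in>esupp G \<phi>. wt G e * (len G e powr (1 - p) *
            \<bar>y (snd (ends G e)) - y (fst (ends G e))\<bar> powr p)))"
  define N' where "N' = (\<lambda>V' (y :: 'a \<Rightarrow> real). (\<Sum>v\<in>V'. vmeas G v * \<bar>y v\<bar> powr q))"
  have R: "enn2real (rho_sup G) \<ge> 0 \<and> (\<forall>v \<in> vsupp G \<phi>.
       (\<Sum>e\<in>{e\<in>esupp G \<phi>. fst (ends G e) \<noteq> snd (ends G e) \<and> (fst (ends G e) = v \<or> snd (ends G e) = v)}.
          wt G e * len G e / 2) \<le> enn2real (rho_sup G) * vmeas G v)" if "p > 1"
    using rho_bound[OF G _ bf(2) bf(3) rho[OF that]] bf(4) by auto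
  have piece: "K * N' V' y powr (1/q) \<le> Cst * D' y powr (1/p)"
    if V': "V' \<subseteq> vsupp G \<phi>" and ysupp: "\<forall>v. y v \<noteq> 0 \<longrightarrow> v \<in> V'"
      and half: "\<And>S. S \<subseteq> V' \<Longrightarrow> ennreal (\<Sum>v\<in>S. vmeas G v) \<le> vol G (pts G) / 2" for V' y
  proof -
    have fV: "finite V'" using V' bf finite_subset by blast
    have iso: "K * (\<Sum>v\<in>S. vmeas G v) powr (1 - 1/\<nu>) \<le>
        (\<Sum>e\<in>esupp G \<phi>. wt G e * cross (\<lambda>e. fst (ends G e)) (\<lambda>e. snd (ends G e)) S e)"
      if S: "S \<subseteq> V'" "S \<noteq> {}" for S
    proof (rule iso_real)
      have fS: "finite S" using S fV finite_subset by blast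
      have Sv: "S \<subseteq> vsupp G \<phi>" using S V' by auto
      show "ennreal K \<le> ennreal ((\<Sum>e\<in>esupp G \<phi>. wt G e * cross (\<lambda>e. fst (ends G e)) (\<lambda>e. snd (ends G e)) S e)
            / (\<Sum>v\<in>S. vmeas G v) powr (1 - 1/\<nu>))"
        unfolding IK(1)[symmetric]
        by (rule iso_tilde_le[OF G cl _ S(2) half[OF S(1)] crossE_sub[OF G C Sv] bf(3) bf(2) nu1])
           (use Sv bf in auto)
      have "(\<Sum>v\<in>S. vmeas G v) > 0" using G Sv bf fS S by (intro sum_pos) (auto simp: is_graph_def)
      then show "(\<Sum>v\<in>S. vmeas G v) powr (1 - 1/\<nu>) > 0" by simp
      show "0 \<le> (\<Sum>e\<in>esupp G \<phi>. wt G e * cross (\<lambda>e. fst (ends G e)) (\<lambda>e. snd (ends G e)) S e)"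
        using G bf by (intro sum_nonneg mult_nonneg_nonneg) (auto simp: is_graph_def cross_def less_imp_le)
    qed
    have R': "enn2real (rho_sup G) \<ge> 0 \<and> (\<forall>v \<in> V'.
       (\<Sum>e\<in>{e\<in>esupp G \<phi>. fst (ends G e) \<noteq> snd (ends G e) \<and> (fst (ends G e) = v \<or> snd (ends G e) = v)}.
          wt G e * len G e / 2) \<le> enn2real (rho_sup G) * vmeas G v)" if "p > 1"
      using R[OF that] V' by auto
    show ?thesis
      unfolding N'_def D'_def Cst_def q_def
      by (rule disc_unified[OF fV bf(2) _ _ _ IK(2) p iso, where x = y and R = "enn2real (rho_sup G)"])
         (use G bf R' V' ysupp in \<open>auto simp: is_graph_def less_imp_le subset_iff\<close>)
  qed
  define xp where "xp = (\<lambda>v. max (x v) 0)"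
  define xm where "xm = (\<lambda>v. max (- x v) 0)"
  define Vp where "Vp = {v\<in>vsupp G \<phi>. x v > 0}"
  define Vm where "Vm = {v\<in>vsupp G \<phi>. x v < 0}"
  have hp: "K * N' Vp xp powr (1/q) \<le> Cst * D' xp powr (1/p)"
  proof (rule piece)
    show "Vp \<subseteq> vsupp G \<phi>" by (auto simp: Vp_def)
    show "\<forall>v. xp v \<noteq> 0 \<longrightarrow> v \<in> Vp"
      by (auto simp: xp_def Vp_def max_def x_def intro: xval_supp split: if_splits)
    fix S assume S: "S \<subseteq> Vp"
    show "ennreal (\<Sum>v\<in>S. vmeas G v) \<le> vol G (pts G) / 2"
    proof -
      have fS: "finite S" using S bf finite_subset[of S "vsupp G \<phi>"] by (auto simp: Vp_def)
      have Ss: "S \<subseteq> {v\<in>verts G. \<phi> (Vx v) > 0}" using S by (auto simp: Vp_def x_def xval_def vsupp_def)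
      have h: "vol G {x \<in> pts G. 0 < \<phi> x} \<le> vol G (pts G) / 2" using sp by (simp add: split_fun_def)
      show ?thesis by (rule half_vol[where P = "\<lambda>t. t > 0" and \<phi> = \<phi>, OF G fS Ss]) (use h in simp)
    qed
  qed
  have hm: "K * N' Vm xm powr (1/q) \<le> Cst * D' xm powr (1/p)"
  proof (rule piece)
    show "Vm \<subseteq> vsupp G \<phi>" by (auto simp: Vm_def)
    show "\<forall>v. xm v \<noteq> 0 \<longrightarrow> v \<in> Vm"
      by (auto simp: xm_def Vm_def max_def x_def intro: xval_supp split: if_splits)
    fix S assume S: "S \<subseteq> Vm"
    show "ennreal (\<Sum>v\<in>S. vmeas G v) \<le> vol G (pts G) / 2"
    proof -
      have fS: "finite S" using S bf finite_subset[of S "vsupp G \<phi>"] by (auto simp: Vm_def)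
      have Ss: "S \<subseteq> {v\<in>verts G. \<phi> (Vx v) < 0}" using S by (auto simp: Vm_def x_def xval_def vsupp_def)
      have h: "vol G {x \<in> pts G. \<phi> x < 0} \<le> vol G (pts G) / 2" using sp by (simp add: split_fun_def)
      show ?thesis by (rule half_vol[where P = "\<lambda>t. t < 0" and \<phi> = \<phi>, OF G fS Ss]) (use h in simp)
    qed
  qed
  have Dsum: "D' xp + D' xm \<le> D' x"
    unfolding D'_def sum.distrib[symmetric]
  proof (rule sum_mono)
    fix e assume e: "e \<in> esupp G \<phi>"
    have we: "wt G e \<ge> 0" "len G e > 0" using G e bf by (auto simp: is_graph_def less_imp_le)
    have "\<bar>xp (snd (ends G e)) - xp (fst (ends G e))\<bar> powr p + \<bar>xm (snd (ends G e)) - xm (fst (ends G e))\<bar> powr p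
        \<le> (\<bar>xp (snd (ends G e)) - xp (fst (ends G e))\<bar> + \<bar>xm (snd (ends G e)) - xm (fst (ends G e))\<bar>) powr p"
      by (rule superadd_pow) (use p in auto)
    also have "\<dots> = \<bar>x (snd (ends G e)) - x (fst (ends G e))\<bar> powr p"
      by (simp add: xp_def xm_def delta_split)
    finally have "wt G e * (len G e powr (1 - p) * (\<bar>xp (snd (ends G e)) - xp (fst (ends G e))\<bar> powr p
         + \<bar>xm (snd (ends G e)) - xm (fst (ends G e))\<bar> powr p))
       \<le> wt G e * (len G e powr (1 - p) * \<bar>x (snd (ends G e)) - x (fst (ends G e))\<bar> powr p)"
      using we by (intro mult_left_mono) auto
    then show "wt G e * (len G e powr (1 - p) * \<bar>xp (snd (ends G e)) - xp (fst (ends G e))\<bar> powr p) +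
          wt G e * (len G e powr (1 - p) * \<bar>xm (snd (ends G e)) - xm (fst (ends G e))\<bar> powr p)
       \<le> wt G e * (len G e powr (1 - p) * \<bar>x (snd (ends G e)) - x (fst (ends G e))\<bar> powr p)"
      by (simp add: algebra_simps)
  qed
  have N0: "N' V y \<ge> 0" if "V \<subseteq> vsupp G \<phi>" for V y
    unfolding N'_def using G that bf by (intro sum_nonneg mult_nonneg_nonneg) (auto simp: is_graph_def less_imp_le)
  have D0: "D' y \<ge> 0" for y
    unfolding D'_def using G bf by (intro sum_nonneg mult_nonneg_nonneg) (auto simp: is_graph_def less_imp_le)
  have comb: "K * ((N' Vp xp powr (1/q)) powr q + (N' Vm xm powr (1/q)) powr q) powr (1/q) \<le> Cst * D' x powr (1/p)"
    by (rule combine_split[OF _ Cst0 p(1) qp _ _ D0 D0 hp hm Dsum]) (use IK(2) in auto)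
  have "(N' Vp xp powr (1/q)) powr q + (N' Vm xm powr (1/q)) powr q = N' Vp xp + N' Vm xm"
    using N0[of Vp xp] N0[of Vm xm] q0 by (simp add: powr_powr Vp_def Vm_def)
  also have "\<dots> = N' Vp x + N' Vm x"
    unfolding N'_def by (intro arg_cong2[where f="(+)"] sum.cong) (auto simp: Vp_def Vm_def xp_def xm_def)
  also have "\<dots> = N' (vsupp G \<phi>) x"
  proof -
    have "vsupp G \<phi> = Vp \<union> Vm" by (auto simp: Vp_def Vm_def vsupp_def x_def xval_def)
    moreover have "Vp \<inter> Vm = {}" by (auto simp: Vp_def Vm_def)
    moreover have "finite Vp" "finite Vm" using bf by (auto simp: Vp_def Vm_def)
    ultimately show ?thesis unfolding N'_def by (simp add: sum.union_disjoint)
  qed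
  finally have Neq: "(N' Vp xp powr (1/q)) powr q + (N' Vm xm powr (1/q)) powr q = N' (vsupp G \<phi>) x" .
  have c2: "K * N' (vsupp G \<phi>) x powr (1/q) \<le> Cst * D' x powr (1/p)"
    using comb by (simp only: Neq)
  have "K * vnorm G q \<phi> \<le> Cst * D' x powr (1/p)"
    using c2 by (simp add: vnorm_eq N'_def x_def)
  also have "\<dots> \<le> Cst * grad_norm G p \<phi>"
    by (rule mult_left_mono[OF _ Cst0]) (use grad_ge[OF G C p(1)] in \<open>simp add: D'_def x_def\<close>)
  finally show ?thesis by (simp add: Cst_def q_def)
qed

lemma vnorm_pos_ne:
  assumes "vnorm G q \<phi> > 0" shows "vsupp G \<phi> \<noteq> {}"
  using assms by (auto simp: vnorm_def)

theorem mainTheorem7: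
  fixes G :: "('v, 'e) mgraph" and \<nu> p :: real and \<phi> :: "('v, 'e) gpoint \<Rightarrow> real"
  assumes "is_graph G" and "1 \<le> p" and "p < \<nu>" and "C1_Dir G \<phi>"
  shows "sob_const (Iso G \<nu>) G \<nu> p * ennreal (vnorm G (p * \<nu> / (\<nu> - p)) \<phi>)
           \<le> ennreal (grad_norm G p \<phi>)
       \<and> (closed_graph G \<longrightarrow> split_fun G \<phi> \<longrightarrow>
         sob_const (Iso_tilde G \<nu>) G \<nu> p * ennreal (vnorm G (p * \<nu> / (\<nu> - p)) \<phi>)
           \<le> ennreal (grad_norm G p \<phi>))"
proof -
  note G = assms(1) and C = assms(4) and p = assms(2,3)
  note bf = basic_facts[OF G C]
  have nu1: "\<nu> > 1" using p by simp
  have N0: "vnorm G (p * \<nu> / (\<nu> - p)) \<phi> \<ge> 0" by (simp add: vnorm_def)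
  have gn0: "grad_norm G p \<phi> \<ge> 0" by (simp add: grad_norm_def)
  have part1: "sob_const (Iso G \<nu>) G \<nu> p * ennreal (vnorm G (p * \<nu> / (\<nu> - p)) \<phi>)
           \<le> ennreal (grad_norm G p \<phi>)"
  proof (rule final_conv[OF p N0 gn0])
    assume "vnorm G (p * \<nu> / (\<nu> - p)) \<phi> > 0"
    then have ne: "vsupp G \<phi> \<noteq> {}" by (rule vnorm_pos_ne)
    have "Iso G \<nu> \<le> ennreal ((\<Sum>e\<in>esupp G \<phi>. wt G e * cross (\<lambda>e. fst (ends G e)) (\<lambda>e. snd (ends G e)) (vsupp G \<phi>) e)
          / (\<Sum>v\<in>vsupp G \<phi>. vmeas G v) powr (1 - 1/\<nu>))"
      by (rule iso_le[OF G bf(4) bf(1) ne bf(5) crossE_sub[OF G C order_refl] bf(3) bf(2) nu1])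
    then show "Iso G \<nu> < top" using ennreal_less_top le_less_trans by blast
  next
    fix K assume "Iso G \<nu> = ennreal K" "K > 0" "p > 1 \<Longrightarrow> rho_sup G < top"
    then show "K * vnorm G (p * \<nu> / (\<nu> - p)) \<phi> \<le> (p * (\<nu> - 1) / (\<nu> - p)) *
           (if p = 1 then 1 else enn2real (rho_sup G) powr ((p - 1) / p)) * grad_norm G p \<phi>"
      by (rule disc_part1[OF G C p])
  qed
  have part2: "sob_const (Iso_tilde G \<nu>) G \<nu> p * ennreal (vnorm G (p * \<nu> / (\<nu> - p)) \<phi>)
           \<le> ennreal (grad_norm G p \<phi>)" if cl: "closed_graph G" and sp: "split_fun G \<phi>"
  proof (rule final_conv[OF p N0 gn0])
    assume "vnorm G (p * \<nu> / (\<nu> - p)) \<phi> > 0"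
    then have ne: "vsupp G \<phi> \<noteq> {}" by (rule vnorm_pos_ne)
    then obtain v where v: "v \<in> vsupp G \<phi>" by blast
    define S where "S = {v \<in> vsupp G \<phi>. \<phi> (Vx v) > 0}"
    define T where "T = {v \<in> vsupp G \<phi>. \<phi> (Vx v) < 0}"
    have "S \<noteq> {} \<or> T \<noteq> {}" using v by (auto simp: S_def T_def vsupp_def) (metis linorder_neqE_linordered_idom)
    then obtain U where U: "U \<noteq> {}" "U \<subseteq> vsupp G \<phi>"
      "ennreal (\<Sum>v\<in>U. vmeas G v) \<le> vol G (pts G) / 2"
    proof (elim disjE)
      assume "S \<noteq> {}"
      moreover have "ennreal (\<Sum>v\<in>S. vmeas G v) \<le> vol G (pts G) / 2"
      proof -
        have fS: "finite S" using bf by (simp add: S_def)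
        have Ss: "S \<subseteq> {v\<in>verts G. \<phi> (Vx v) > 0}" by (auto simp: S_def vsupp_def)
        have h: "vol G {x \<in> pts G. 0 < \<phi> x} \<le> vol G (pts G) / 2" using sp by (simp add: split_fun_def)
        show ?thesis by (rule half_vol[where P = "\<lambda>t. t > 0" and \<phi> = \<phi>, OF G fS Ss]) (use h in simp)
      qed
      ultimately show thesis using that[of S] by (auto simp: S_def)
    next
      assume "T \<noteq> {}"
      moreover have "ennreal (\<Sum>v\<in>T. vmeas G v) \<le> vol G (pts G) / 2"
      proof -
        have fS: "finite T" using bf by (simp add: T_def)
        have Ss: "T \<subseteq> {v\<in>verts G. \<phi> (Vx v) < 0}" by (auto simp: T_def vsupp_def)
        have h: "vol G {x \<in> pts G. \<phi> x < 0} \<le> vol G (pts G) / 2" using sp by (simp add: split_fun_def)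
        show ?thesis by (rule half_vol[where P = "\<lambda>t. t < 0" and \<phi> = \<phi>, OF G fS Ss]) (use h in simp)
      qed
      ultimately show thesis using that[of T] by (auto simp: T_def)
    qed
    have "Iso_tilde G \<nu> \<le> ennreal ((\<Sum>e\<in>esupp G \<phi>. wt G e * cross (\<lambda>e. fst (ends G e)) (\<lambda>e. snd (ends G e)) U e)
          / (\<Sum>v\<in>U. vmeas G v) powr (1 - 1/\<nu>))"
      by (rule iso_tilde_le[OF G cl _ U(1) U(3) crossE_sub[OF G C U(2)] bf(3) bf(2) nu1]) (use U bf in auto)
    then show "Iso_tilde G \<nu> < top" using ennreal_less_top le_less_trans by blast
  next
    fix K assume "Iso_tilde G \<nu> = ennreal K" "K > 0" "p > 1 \<Longrightarrow> rho_sup G < top"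
    then show "K * vnorm G (p * \<nu> / (\<nu> - p)) \<phi> \<le> (p * (\<nu> - 1) / (\<nu> - p)) *
           (if p = 1 then 1 else enn2real (rho_sup G) powr ((p - 1) / p)) * grad_norm G p \<phi>"
      by (rule disc_part2[OF G C p cl sp])
  qed
  show ?thesis using part1 part2 by blast
qed

end
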